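(* Let $\mathcal{A}^{(+)}$ be the unital associative $\mathbb{C}$-algebra generated by $\nabla_0,\nabla_1,\nabla_2,\nabla_3$ with relations $[\nabla_0,\nabla_k]=[\nabla_\ell,\nabla_m]$ for every cyclic permutation $(k,\ell,m)$ of $(1,2,3)$. Let $L=L(\nabla_1,\nabla_2,\nabla_3)$ be the free Lie algebra on $\nabla_1,\nabla_2,\nabla_3$ (graded with generators in degree $1$), and let $\delta$ be the degree-one derivation of $L$ determined by $\delta(\nabla_k)=[\nabla_\ell,\nabla_m]$ for every cyclic permutation $(k,\ell,m)$ of $(1,2,3)$. Then $\mathcal{A}^{(+)}$ is isomorphic to the universal enveloping algebra of the semi-direct product graded Lie algebra $\mathbb{C}\delta\ltimes L$ (with $\delta$ of degree $1$ and $\nabla_0$ corresponding to $\delta$). *)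

theory Defs
  imports Complex_Main
begin

definition fsupp :: "('a \<Rightarrow> complex) \<Rightarrow> bool" where
  "fsupp f \<longleftrightarrow> finite {x. f x \<noteq> 0}"

definition vzero :: "'a \<Rightarrow> complex" where "vzero = (\<lambda>_. 0)"
definition vadd :: "('a \<Rightarrow> complex) \<Rightarrow> ('a \<Rightarrow> complex) \<Rightarrow> 'a \<Rightarrow> complex" where
  "vadd f g = (\<lambda>x. f x + g x)"
definition vdiff :: "('a \<Rightarrow> complex) \<Rightarrow> ('a \<Rightarrow> complex) \<Rightarrow> 'a \<Rightarrow> complex" where
  "vdiff f g = (\<lambda>x. f x - g x)"
definition vscal :: "complex \<Rightarrow> ('a \<Rightarrow> complex) \<Rightarrow> 'a \<Rightarrow> complex" where
  "vscal c f = (\<lambda>x. c * f x)"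

definition FA :: "'x set \<Rightarrow> ('x list \<Rightarrow> complex) set" where
  "FA S = {p. fsupp p \<and> (\<forall>w. p w \<noteq> 0 \<longrightarrow> set w \<subseteq> S)}"

definition fa_one :: "'x list \<Rightarrow> complex" where
  "fa_one = (\<lambda>w. if w = [] then 1 else 0)"

definition fa_gen :: "'x \<Rightarrow> 'x list \<Rightarrow> complex" where
  "fa_gen x = (\<lambda>w. if w = [x] then 1 else 0)"

definition fa_mult :: "('x list \<Rightarrow> complex) \<Rightarrow> ('x list \<Rightarrow> complex) \<Rightarrow> 'x list \<Rightarrow> complex" where
  "fa_mult p q = (\<lambda>w. \<Sum>i\<le>length w. p (take i w) * q (drop i w))"

definition fa_comm :: "('x list \<Rightarrow> complex) \<Rightarrow> ('x list \<Rightarrow> complex) \<Rightarrow> 'x list \<Rightarrow> complex" where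
  "fa_comm p q = vdiff (fa_mult p q) (fa_mult q p)"

inductive_set fa_ideal :: "'x set \<Rightarrow> ('x list \<Rightarrow> complex) set \<Rightarrow> ('x list \<Rightarrow> complex) set"
  for S R where
  zero: "vzero \<in> fa_ideal S R"
| gen: "r \<in> R \<Longrightarrow> r \<in> fa_ideal S R"
| add: "p \<in> fa_ideal S R \<Longrightarrow> q \<in> fa_ideal S R \<Longrightarrow> vadd p q \<in> fa_ideal S R"
| lmult: "a \<in> FA S \<Longrightarrow> p \<in> fa_ideal S R \<Longrightarrow> fa_mult a p \<in> fa_ideal S R"
| rmult: "a \<in> FA S \<Longrightarrow> p \<in> fa_ideal S R \<Longrightarrow> fa_mult p a \<in> fa_ideal S R"

definition quot_alg_iso ::
  "'x set \<Rightarrow> ('x list \<Rightarrow> complex) set \<Rightarrow> 'y set \<Rightarrow> ('y list \<Rightarrow> complex) set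
   \<Rightarrow> (('x list \<Rightarrow> complex) \<Rightarrow> ('y list \<Rightarrow> complex)) \<Rightarrow> bool" where
  "quot_alg_iso S1 I1 S2 I2 \<phi> \<longleftrightarrow>
     (\<forall>p\<in>FA S1. \<phi> p \<in> FA S2) \<and>
     (\<forall>p\<in>FA S1. \<forall>q\<in>FA S1. \<phi> (vadd p q) = vadd (\<phi> p) (\<phi> q)) \<and>
     (\<forall>c. \<forall>p\<in>FA S1. \<phi> (vscal c p) = vscal c (\<phi> p)) \<and>
     (\<forall>p\<in>FA S1. \<forall>q\<in>FA S1. \<phi> (fa_mult p q) = fa_mult (\<phi> p) (\<phi> q)) \<and>
     \<phi> fa_one = fa_one \<and>
     (\<forall>p\<in>FA S1. \<phi> p \<in> I2 \<longleftrightarrow> p \<in> I1) \<and>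
     (\<forall>q\<in>FA S2. \<exists>p\<in>FA S1. vdiff q (\<phi> p) \<in> I2)"

definition cyc :: "(nat \<times> nat \<times> nat) set" where
  "cyc = {(1,2,3), (2,3,1), (3,1,2)}"

definition Aplus_rels :: "(nat list \<Rightarrow> complex) set" where
  "Aplus_rels = {vdiff (fa_comm (fa_gen 0) (fa_gen k)) (fa_comm (fa_gen l) (fa_gen m)) | k l m.
                   (k, l, m) \<in> cyc}"

definition Aplus_ideal :: "(nat list \<Rightarrow> complex) set" where
  "Aplus_ideal = fa_ideal {0,1,2,3} Aplus_rels"

section \<open>Free Lie algebra on a set S (free nonassociative algebra modulo alternativity and Jacobi)\<close>

datatype 'x mtree = Leaf 'x | Node "'x mtree" "'x mtree"

definition FM :: "'x set \<Rightarrow> ('x mtree \<Rightarrow> complex) set" where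
  "FM S = {p. fsupp p \<and> (\<forall>t. p t \<noteq> 0 \<longrightarrow> set_mtree t \<subseteq> S)}"

definition fm_single :: "'x mtree \<Rightarrow> 'x mtree \<Rightarrow> complex" where
  "fm_single t = (\<lambda>s. if s = t then 1 else 0)"

definition fm_mult :: "('x mtree \<Rightarrow> complex) \<Rightarrow> ('x mtree \<Rightarrow> complex) \<Rightarrow> 'x mtree \<Rightarrow> complex" where
  "fm_mult p q = (\<lambda>t. case t of Leaf _ \<Rightarrow> 0 | Node a b \<Rightarrow> p a * q b)"

definition fm_jacobi :: "('x mtree \<Rightarrow> complex) \<Rightarrow> ('x mtree \<Rightarrow> complex) \<Rightarrow> ('x mtree \<Rightarrow> complex)
    \<Rightarrow> 'x mtree \<Rightarrow> complex" where
  "fm_jacobi a b c = vadd (vadd (fm_mult (fm_mult a b) c) (fm_mult (fm_mult b c) a))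
                          (fm_mult (fm_mult c a) b)"

inductive_set lie_ideal :: "'x set \<Rightarrow> ('x mtree \<Rightarrow> complex) set" for S where
  zero: "vzero \<in> lie_ideal S"
| add: "p \<in> lie_ideal S \<Longrightarrow> q \<in> lie_ideal S \<Longrightarrow> vadd p q \<in> lie_ideal S"
| scal: "p \<in> lie_ideal S \<Longrightarrow> vscal c p \<in> lie_ideal S"
| alt: "a \<in> FM S \<Longrightarrow> fm_mult a a \<in> lie_ideal S"
| jac: "a \<in> FM S \<Longrightarrow> b \<in> FM S \<Longrightarrow> c \<in> FM S \<Longrightarrow> fm_jacobi a b c \<in> lie_ideal S"
| lmult: "a \<in> FM S \<Longrightarrow> p \<in> lie_ideal S \<Longrightarrow> fm_mult a p \<in> lie_ideal S"
| rmult: "a \<in> FM S \<Longrightarrow> p \<in> lie_ideal S \<Longrightarrow> fm_mult p a \<in> lie_ideal S"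

definition fl_class :: "'x set \<Rightarrow> ('x mtree \<Rightarrow> complex) \<Rightarrow> ('x mtree \<Rightarrow> complex) set" where
  "fl_class S p = {q \<in> FM S. vdiff q p \<in> lie_ideal S}"

definition FL :: "'x set \<Rightarrow> ('x mtree \<Rightarrow> complex) set set" where
  "FL S = fl_class S ` FM S"

definition fl_rep :: "('x mtree \<Rightarrow> complex) set \<Rightarrow> 'x mtree \<Rightarrow> complex" where
  "fl_rep X = (SOME p. p \<in> X)"

definition fl_zero :: "'x set \<Rightarrow> ('x mtree \<Rightarrow> complex) set" where
  "fl_zero S = fl_class S vzero"
definition fl_add :: "'x set \<Rightarrow> ('x mtree \<Rightarrow> complex) set \<Rightarrow> ('x mtree \<Rightarrow> complex) set
    \<Rightarrow> ('x mtree \<Rightarrow> complex) set" where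
  "fl_add S X Y = fl_class S (vadd (fl_rep X) (fl_rep Y))"
definition fl_scal :: "'x set \<Rightarrow> complex \<Rightarrow> ('x mtree \<Rightarrow> complex) set \<Rightarrow> ('x mtree \<Rightarrow> complex) set" where
  "fl_scal S c X = fl_class S (vscal c (fl_rep X))"
definition fl_bracket :: "'x set \<Rightarrow> ('x mtree \<Rightarrow> complex) set \<Rightarrow> ('x mtree \<Rightarrow> complex) set
    \<Rightarrow> ('x mtree \<Rightarrow> complex) set" where
  "fl_bracket S X Y = fl_class S (fm_mult (fl_rep X) (fl_rep Y))"

definition S3 :: "nat set" where "S3 = {1,2,3}"

primrec dtree :: "nat mtree \<Rightarrow> nat mtree \<Rightarrow> complex" where
  "dtree (Leaf k) =
     (if k = 1 then fm_single (Node (Leaf 2) (Leaf 3))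
      else if k = 2 then fm_single (Node (Leaf 3) (Leaf 1))
      else if k = 3 then fm_single (Node (Leaf 1) (Leaf 2))
      else vzero)"
| "dtree (Node a b) = vadd (fm_mult (dtree a) (fm_single b)) (fm_mult (fm_single a) (dtree b))"

definition fm_der :: "(nat mtree \<Rightarrow> complex) \<Rightarrow> nat mtree \<Rightarrow> complex" where
  "fm_der p = (\<lambda>t. \<Sum>s\<in>{s. p s \<noteq> 0}. p s * dtree s t)"

definition fl_delta :: "(nat mtree \<Rightarrow> complex) set \<Rightarrow> (nat mtree \<Rightarrow> complex) set" where
  "fl_delta X = fl_class S3 (fm_der (fl_rep X))"

type_synonym gelt = "complex \<times> (nat mtree \<Rightarrow> complex) set"

definition gcar :: "gelt set" where "gcar = UNIV \<times> FL S3"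

definition g_add :: "gelt \<Rightarrow> gelt \<Rightarrow> gelt" where
  "g_add u v = (fst u + fst v, fl_add S3 (snd u) (snd v))"
definition g_scal :: "complex \<Rightarrow> gelt \<Rightarrow> gelt" where
  "g_scal a u = (a * fst u, fl_scal S3 a (snd u))"
text \<open>[c delta + X, d delta + Y] = c delta(Y) - d delta(X) + [X,Y].\<close>
definition g_bracket :: "gelt \<Rightarrow> gelt \<Rightarrow> gelt" where
  "g_bracket u v = (0, fl_add S3 (fl_add S3 (fl_scal S3 (fst u) (fl_delta (snd v)))
                                          (fl_scal S3 (- fst v) (fl_delta (snd u))))
                                 (fl_bracket S3 (snd u) (snd v)))"
definition g_delta :: gelt where "g_delta = (1, fl_zero S3)"
definition g_gen :: "nat \<Rightarrow> gelt" where
  "g_gen k = (0, fl_class S3 (fm_single (Leaf k)))"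

text \<open>U(g) = tensor algebra T(g) (free algebra on the elements of g modulo linearity)
  modulo x y - y x - [x,y].\<close>
definition U_rels :: "(gelt list \<Rightarrow> complex) set" where
  "U_rels =
     {vdiff (fa_gen (g_add u v)) (vadd (fa_gen u) (fa_gen v)) | u v. u \<in> gcar \<and> v \<in> gcar}
   \<union> {vdiff (fa_gen (g_scal c u)) (vscal c (fa_gen u)) | c u. u \<in> gcar}
   \<union> {vdiff (fa_comm (fa_gen u) (fa_gen v)) (fa_gen (g_bracket u v)) | u v. u \<in> gcar \<and> v \<in> gcar}"

definition U_ideal :: "(gelt list \<Rightarrow> complex) set" where
  "U_ideal = fa_ideal gcar U_rels"

end

theory Submission
  imports Defs "HOL-Library.Function_Algebras"
begin


definition supp :: "('a \<Rightarrow> complex) \<Rightarrow> 'a set" where "supp p = {x. p x \<noteq> 0}"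
definition sg :: "'a \<Rightarrow> 'a \<Rightarrow> complex" where "sg t = (\<lambda>x. if x = t then 1 else 0)"
definition lin :: "('a \<Rightarrow> 'b \<Rightarrow> complex) \<Rightarrow> ('a \<Rightarrow> complex) \<Rightarrow> 'b \<Rightarrow> complex" where
  "lin g p = (\<lambda>x. \<Sum>t\<in>supp p. p t * g t x)"

lemma vadd_eq: "vadd p q = p + q" by (simp add: vadd_def plus_fun_def)
lemma vdiff_eq: "vdiff p q = p - q" by (simp add: vdiff_def fun_diff_def)
lemma vzero_eq: "vzero = 0" by (simp add: vzero_def zero_fun_def)
lemma fa_gen_sg: "fa_gen x = sg [x]" by (simp add: fa_gen_def sg_def)
lemma fa_one_sg: "fa_one = sg []" by (simp add: fa_one_def sg_def)
lemma fm_single_sg: "fm_single t = sg t" by (simp add: fm_single_def sg_def)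
lemma fa_comm_eq: "fa_comm p q = fa_mult p q - fa_mult q p" by (simp add: fa_comm_def vdiff_eq)

lemma fsupp_supp: "fsupp p \<longleftrightarrow> finite (supp p)" by (simp add: fsupp_def supp_def)

lemma fsupp_zero[simp]: "fsupp (0::'a \<Rightarrow> complex)" by (simp add: fsupp_def)
lemma fsupp_sg[simp]: "fsupp (sg t)" by (simp add: fsupp_def sg_def)
lemma fsupp_add[simp]: "fsupp p \<Longrightarrow> fsupp q \<Longrightarrow> fsupp (p + q)"
  unfolding fsupp_def by (rule finite_subset[of _ "{x. p x \<noteq> 0} \<union> {x. q x \<noteq> 0}"]) auto
lemma fsupp_diff[simp]: "fsupp p \<Longrightarrow> fsupp q \<Longrightarrow> fsupp (p - q)"
  unfolding fsupp_def by (rule finite_subset[of _ "{x. p x \<noteq> 0} \<union> {x. q x \<noteq> 0}"]) auto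
lemma fsupp_scal[simp]: "fsupp p \<Longrightarrow> fsupp (vscal c p)"
  unfolding fsupp_def vscal_def by (rule finite_subset[of _ "{x. p x \<noteq> 0}"]) auto

lemma vscal_add: "vscal c (p + q) = vscal c p + vscal c q"
  by (simp add: vscal_def fun_eq_iff algebra_simps)
lemma vscal_diff: "vscal c (p - q) = vscal c p - vscal c q"
  by (simp add: vscal_def fun_eq_iff algebra_simps)
lemma vscal_zero[simp]: "vscal c 0 = 0" by (simp add: vscal_def fun_eq_iff)
lemma vscal_0[simp]: "vscal 0 p = 0" by (simp add: vscal_def fun_eq_iff)
lemma vscal_1[simp]: "vscal 1 p = p" by (simp add: vscal_def fun_eq_iff)
lemma vscal_vscal: "vscal a (vscal b p) = vscal (a*b) p" by (simp add: vscal_def fun_eq_iff)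
lemma vscal_addc: "vscal (a+b) p = vscal a p + vscal b p" by (simp add: vscal_def fun_eq_iff algebra_simps)
lemma vscal_m1: "vscal (-1) p = - p" by (simp add: vscal_def fun_eq_iff)
lemma vscal_neg: "vscal (-a) p = - vscal a p" by (simp add: vscal_def fun_eq_iff)

lemma fsupp_induct[consumes 2, case_names zero step]:
  assumes "fsupp p" "\<forall>t. p t \<noteq> 0 \<longrightarrow> Q t"
    and "P 0"
    and "\<And>q c t. fsupp q \<Longrightarrow> \<forall>s. q s \<noteq> 0 \<longrightarrow> Q s \<Longrightarrow> Q t \<Longrightarrow> P q \<Longrightarrow> P (q + vscal c (sg t))"
  shows "P p"
proof -
  have "\<And>p. supp p \<subseteq> D \<Longrightarrow> (\<forall>t. p t \<noteq> 0 \<longrightarrow> Q t) \<Longrightarrow> P p" if "finite D" for D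
    using that
  proof (induction D rule: finite_induct)
    case empty
    then have "p = 0" by (auto simp: supp_def fun_eq_iff)
    then show ?case using assms(3) by (simp only:)
  next
    case (insert t D)
    define q where "q = p(t := 0)"
    have sq: "supp q \<subseteq> D" using insert.prems(1) by (auto simp: q_def supp_def)
    have Qq: "\<forall>t'. q t' \<noteq> 0 \<longrightarrow> Q t'" using insert.prems(2) by (simp add: q_def)
    then have "P q" using insert.IH[OF sq] by blast
    moreover have fq: "fsupp q" using sq insert.hyps(1) by (simp add: fsupp_supp finite_subset)
    show ?case
    proof (cases "p t = 0")
      case True
      then have "p = q" by (auto simp: q_def fun_eq_iff)
      then show ?thesis using \<open>P q\<close> by simp
    next
      case False
      then have "p = q + vscal (p t) (sg t)" by (auto simp: q_def fun_eq_iff vscal_def sg_def)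
      then show ?thesis using assms(4)[OF fq Qq, of t "p t"] False insert.prems(2) \<open>P q\<close> by auto
    qed
  qed
  then show ?thesis using assms(1,2) by (auto simp: fsupp_supp)
qed

lemma fsupp_induct0[consumes 1, case_names zero step]:
  assumes "fsupp p" "P 0"
    and "\<And>q c t. fsupp q \<Longrightarrow> P q \<Longrightarrow> P (q + vscal c (sg t))"
  shows "P p"
  using assms(1) _ assms(2) by (rule fsupp_induct[where Q="\<lambda>_. True"]) (blast intro: assms(3))+

lemma lin_superset: "finite D \<Longrightarrow> supp p \<subseteq> D \<Longrightarrow> lin g p = (\<lambda>x. \<Sum>t\<in>D. p t * g t x)"
  unfolding lin_def
  by (rule ext, rule sum.mono_neutral_left) (auto simp: supp_def)

lemma lin_add: "fsupp p \<Longrightarrow> fsupp q \<Longrightarrow> lin g (p + q) = lin g p + lin g q"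
proof -
  assume a: "fsupp p" "fsupp q"
  let ?D = "supp p \<union> supp q"
  have f: "finite ?D" using a by (simp add: fsupp_supp)
  have "lin g (p+q) = (\<lambda>x. \<Sum>t\<in>?D. (p+q) t * g t x)"
    by (rule lin_superset[OF f]) (auto simp: supp_def)
  moreover have "lin g p = (\<lambda>x. \<Sum>t\<in>?D. p t * g t x)" by (rule lin_superset[OF f]) auto
  moreover have "lin g q = (\<lambda>x. \<Sum>t\<in>?D. q t * g t x)" by (rule lin_superset[OF f]) auto
  ultimately show ?thesis by (simp add: fun_eq_iff distrib_right sum.distrib)
qed

lemma lin_diff: "fsupp p \<Longrightarrow> fsupp q \<Longrightarrow> lin g (p - q) = lin g p - lin g q"
proof -
  assume a: "fsupp p" "fsupp q"
  let ?D = "supp p \<union> supp q"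
  have f: "finite ?D" using a by (simp add: fsupp_supp)
  have "lin g (p-q) = (\<lambda>x. \<Sum>t\<in>?D. (p-q) t * g t x)"
    by (rule lin_superset[OF f]) (auto simp: supp_def)
  moreover have "lin g p = (\<lambda>x. \<Sum>t\<in>?D. p t * g t x)" by (rule lin_superset[OF f]) auto
  moreover have "lin g q = (\<lambda>x. \<Sum>t\<in>?D. q t * g t x)" by (rule lin_superset[OF f]) auto
  ultimately show ?thesis by (simp add: fun_eq_iff left_diff_distrib sum_subtractf)
qed

lemma lin_scal: "fsupp p \<Longrightarrow> lin g (vscal c p) = vscal c (lin g p)"
proof -
  assume a: "fsupp p"
  have f: "finite (supp p)" using a by (simp add: fsupp_supp)
  have "lin g (vscal c p) = (\<lambda>x. \<Sum>t\<in>supp p. vscal c p t * g t x)"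
    by (rule lin_superset[OF f]) (auto simp: supp_def vscal_def)
  then show ?thesis by (simp add: lin_def vscal_def fun_eq_iff sum_distrib_left mult.assoc)
qed

lemma lin_zero[simp]: "lin g 0 = 0" by (simp add: lin_def supp_def fun_eq_iff)

lemma lin_sg[simp]: "lin g (sg t) = g t"
proof -
  have "lin g (sg t) = (\<lambda>x. \<Sum>s\<in>{t}. sg t s * g s x)"
    by (rule lin_superset) (auto simp: supp_def sg_def)
  then show ?thesis by (simp add: sg_def)
qed

lemma lin_step: "fsupp q \<Longrightarrow> lin g (q + vscal c (sg t)) = lin g q + vscal c (g t)"
  by (simp add: lin_add lin_scal)

lemmas fun_apply_simps = plus_fun_apply minus_apply uminus_apply zero_fun_apply
declare plus_fun_apply[simp del] minus_apply[simp del] uminus_apply[simp del] zero_fun_apply[simp del]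

lemma lin_cong: "(\<And>t. p t \<noteq> 0 \<Longrightarrow> g t = h t) \<Longrightarrow> lin g p = lin h p"
  by (simp add: lin_def supp_def)



lemma fa_mult_add_left: "fa_mult (p + q) r = fa_mult p r + fa_mult q r"
  by (simp add: fa_mult_def fun_eq_iff fun_apply_simps distrib_right sum.distrib)
lemma fa_mult_add_right: "fa_mult r (p + q) = fa_mult r p + fa_mult r q"
  by (simp add: fa_mult_def fun_eq_iff fun_apply_simps distrib_left sum.distrib)
lemma fa_mult_diff_left: "fa_mult (p - q) r = fa_mult p r - fa_mult q r"
  by (simp add: fa_mult_def fun_eq_iff fun_apply_simps left_diff_distrib sum_subtractf)
lemma fa_mult_diff_right: "fa_mult r (p - q) = fa_mult r p - fa_mult r q"
  by (simp add: fa_mult_def fun_eq_iff fun_apply_simps right_diff_distrib sum_subtractf)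
lemma fa_mult_scal_left: "fa_mult (vscal c p) r = vscal c (fa_mult p r)"
  by (simp add: fa_mult_def fun_eq_iff fun_apply_simps vscal_def sum_distrib_left mult.assoc)
lemma fa_mult_scal_right: "fa_mult r (vscal c p) = vscal c (fa_mult r p)"
  by (simp add: fa_mult_def fun_eq_iff fun_apply_simps vscal_def sum_distrib_left mult.left_commute)
lemma fa_mult_zero_left[simp]: "fa_mult 0 r = 0"
  by (simp add: fa_mult_def fun_eq_iff fun_apply_simps)
lemma fa_mult_zero_right[simp]: "fa_mult r 0 = 0"
  by (simp add: fa_mult_def fun_eq_iff fun_apply_simps)
lemma fa_mult_neg_left: "fa_mult (- p) r = - fa_mult p r"
  using fa_mult_diff_left[of 0 p r] by simp
lemma fa_mult_neg_right: "fa_mult r (- p) = - fa_mult r p"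
  using fa_mult_diff_right[of r 0 p] by simp

lemmas fa_mult_lin = fa_mult_add_left fa_mult_add_right fa_mult_diff_left fa_mult_diff_right
  fa_mult_scal_left fa_mult_scal_right fa_mult_neg_left fa_mult_neg_right

lemma take_drop_iff:
  assumes "i \<le> length w"
  shows "(take i w = u \<and> drop i w = v) \<longleftrightarrow> (i = length u \<and> w = u @ v)"
proof
  assume h: "take i w = u \<and> drop i w = v"
  then have "w = u @ v" by (metis append_take_drop_id)
  moreover have "length u = i" using h assms by auto
  ultimately show "i = length u \<and> w = u @ v" by simp
qed auto

lemma fa_mult_sg: "fa_mult (sg u) (sg v) = sg (u @ v)"
proof (rule ext)
  fix w :: "'a list"
  have "fa_mult (sg u) (sg v) w = (\<Sum>i\<le>length w. if i = length u \<and> w = u @ v then 1 else 0)"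
    unfolding fa_mult_def sg_def
    by (rule sum.cong[OF refl]) (use take_drop_iff in auto)
  also have "\<dots> = sg (u @ v) w"
    by (auto simp: sg_def)
  finally show "fa_mult (sg u) (sg v) w = sg (u @ v) w" .
qed

lemma fa_mult_nonzero:
  assumes "fa_mult p q w \<noteq> 0"
  shows "\<exists>u v. w = u @ v \<and> p u \<noteq> 0 \<and> q v \<noteq> 0"
proof -
  from assms obtain i where "p (take i w) * q (drop i w) \<noteq> 0"
    unfolding fa_mult_def by (meson sum.not_neutral_contains_not_neutral)
  then show ?thesis by (intro exI[of _ "take i w"] exI[of _ "drop i w"]) auto
qed

lemma fsupp_fa_mult[simp]: "fsupp p \<Longrightarrow> fsupp q \<Longrightarrow> fsupp (fa_mult p q)"
  unfolding fsupp_def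
  apply (rule finite_subset[of _ "(\<lambda>(u,v). u @ v) ` ({x. p x \<noteq> 0} \<times> {x. q x \<noteq> 0})"])
   apply (auto dest!: fa_mult_nonzero)
  done

lemma fa_one_left: assumes "fsupp p" shows "fa_mult (sg []) p = p"
  using assms proof (induction rule: fsupp_induct0)
  case (step q c t) then show ?case by (simp add: fa_mult_lin fa_mult_sg)
qed auto
lemma fa_one_right: assumes "fsupp p" shows "fa_mult p (sg []) = p"
  using assms proof (induction rule: fsupp_induct0)
  case (step q c t) then show ?case by (simp add: fa_mult_lin fa_mult_sg)
qed auto

lemma fa_assoc0: assumes "fsupp r" shows "fa_mult (fa_mult (sg u) (sg v)) r = fa_mult (sg u) (fa_mult (sg v) r)"
  using assms proof (induction rule: fsupp_induct0)
  case (step q c t) then show ?case by (simp add: fa_mult_lin fa_mult_sg)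
qed auto
lemma fa_assoc1: assumes "fsupp q" "fsupp r" shows "fa_mult (fa_mult (sg u) q) r = fa_mult (sg u) (fa_mult q r)"
  using assms(1) proof (induction rule: fsupp_induct0)
  case (step q c t) then show ?case using assms(2) by (simp add: fa_mult_lin fa_assoc0)
qed auto
lemma fa_assoc: assumes "fsupp p" "fsupp q" "fsupp r" shows "fa_mult (fa_mult p q) r = fa_mult p (fa_mult q r)"
  using assms(1) proof (induction rule: fsupp_induct0)
  case (step p' c t) then show ?case using assms(2,3) by (simp add: fa_mult_lin fa_assoc1)
qed auto

lemma FA_fsupp: "p \<in> FA S \<Longrightarrow> fsupp p" by (simp add: FA_def)
lemma FA_D: "p \<in> FA S \<Longrightarrow> \<forall>w. p w \<noteq> 0 \<longrightarrow> set w \<subseteq> S" by (simp add: FA_def)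
lemma FA_zero[simp]: "0 \<in> FA S" by (simp add: FA_def fun_apply_simps)
lemma FA_sg: "set w \<subseteq> S \<Longrightarrow> sg w \<in> FA S"
  by (simp add: FA_def) (simp add: sg_def)
lemma FA_add[simp]: assumes "p \<in> FA S" "q \<in> FA S" shows "p + q \<in> FA S"
  unfolding FA_def proof (intro CollectI conjI allI impI)
  show "fsupp (p+q)" using assms by (simp add: FA_def)
  fix w assume "(p+q) w \<noteq> 0"
  then have "p w \<noteq> 0 \<or> q w \<noteq> 0" by (auto simp: fun_apply_simps)
  then show "set w \<subseteq> S" using assms by (auto simp: FA_def)
qed
lemma FA_diff[simp]: assumes "p \<in> FA S" "q \<in> FA S" shows "p - q \<in> FA S"
  unfolding FA_def proof (intro CollectI conjI allI impI)
  show "fsupp (p-q)" using assms by (simp add: FA_def)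
  fix w assume "(p-q) w \<noteq> 0"
  then have "p w \<noteq> 0 \<or> q w \<noteq> 0" by (auto simp: fun_apply_simps)
  then show "set w \<subseteq> S" using assms by (auto simp: FA_def)
qed
lemma FA_neg[simp]: "p \<in> FA S \<Longrightarrow> - p \<in> FA S"
  using FA_diff[of 0 S p] by simp
lemma FA_scal[simp]: assumes "p \<in> FA S" shows "vscal c p \<in> FA S"
  unfolding FA_def proof (intro CollectI conjI allI impI)
  show "fsupp (vscal c p)" using assms by (simp add: FA_def)
  fix w assume "vscal c p w \<noteq> 0"
  then have "p w \<noteq> 0" by (auto simp: vscal_def)
  then show "set w \<subseteq> S" using assms by (auto simp: FA_def)
qed
lemma FA_mult[simp]: assumes "p \<in> FA S" "q \<in> FA S" shows "fa_mult p q \<in> FA S"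
  unfolding FA_def proof (intro CollectI conjI allI impI)
  show "fsupp (fa_mult p q)" using assms by (simp add: FA_def)
  fix w assume "fa_mult p q w \<noteq> 0"
  then obtain u v where "w = u @ v" "p u \<noteq> 0" "q v \<noteq> 0" by (blast dest: fa_mult_nonzero)
  then show "set w \<subseteq> S" using assms by (auto simp: FA_def)
qed
lemma FA_comm[simp]: "p \<in> FA S \<Longrightarrow> q \<in> FA S \<Longrightarrow> fa_comm p q \<in> FA S"
  by (simp add: fa_comm_eq)

lemma FA_assoc: "p \<in> FA S \<Longrightarrow> q \<in> FA S' \<Longrightarrow> r \<in> FA S'' \<Longrightarrow> fa_mult (fa_mult p q) r = fa_mult p (fa_mult q r)"
  by (simp add: fa_assoc FA_fsupp)

lemma fa_comm_add_left: "fa_comm (p + q) r = fa_comm p r + fa_comm q r"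
  by (simp add: fa_comm_eq fa_mult_lin)
lemma fa_comm_add_right: "fa_comm r (p + q) = fa_comm r p + fa_comm r q"
  by (simp add: fa_comm_eq fa_mult_lin)
lemma fa_comm_diff_left: "fa_comm (p - q) r = fa_comm p r - fa_comm q r"
  by (simp add: fa_comm_eq fa_mult_lin)
lemma fa_comm_diff_right: "fa_comm r (p - q) = fa_comm r p - fa_comm r q"
  by (simp add: fa_comm_eq fa_mult_lin)
lemma fa_comm_scal_left: "fa_comm (vscal c p) r = vscal c (fa_comm p r)"
  by (simp add: fa_comm_eq fa_mult_lin vscal_diff)
lemma fa_comm_scal_right: "fa_comm r (vscal c p) = vscal c (fa_comm r p)"
  by (simp add: fa_comm_eq fa_mult_lin vscal_diff)
lemma fa_comm_zero_left[simp]: "fa_comm 0 r = 0" by (simp add: fa_comm_eq)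
lemma fa_comm_zero_right[simp]: "fa_comm r 0 = 0" by (simp add: fa_comm_eq)
lemma fa_comm_self[simp]: "fa_comm r r = 0" by (simp add: fa_comm_eq)

lemmas fa_comm_lin = fa_comm_add_left fa_comm_add_right fa_comm_diff_left fa_comm_diff_right
  fa_comm_scal_left fa_comm_scal_right

lemma fa_jacobi:
  assumes "fsupp a" "fsupp b" "fsupp c"
  shows "fa_comm (fa_comm a b) c + fa_comm (fa_comm b c) a + fa_comm (fa_comm c a) b = 0"
  using assms by (simp add: fa_comm_eq fa_mult_lin fa_assoc)

lemma fa_comm_leibniz:
  assumes "fsupp a" "fsupp b" "fsupp c"
  shows "fa_comm a (fa_comm b c) = fa_comm (fa_comm a b) c + fa_comm b (fa_comm a c)"
  using assms by (simp add: fa_comm_eq fa_mult_lin fa_assoc)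

lemma fa_ideal_FA: assumes "R \<subseteq> FA S" "p \<in> fa_ideal S R" shows "p \<in> FA S"
  using assms(2) by (induction rule: fa_ideal.induct) (use assms(1) in \<open>auto simp: vzero_eq vadd_eq\<close>)

lemma ideal_zero[simp]: "0 \<in> fa_ideal S R" using fa_ideal.zero by (simp add: vzero_eq)
lemma ideal_add: "p \<in> fa_ideal S R \<Longrightarrow> q \<in> fa_ideal S R \<Longrightarrow> p + q \<in> fa_ideal S R"
  using fa_ideal.add by (simp add: vadd_eq)
lemma ideal_scal:
  assumes "R \<subseteq> FA S" "p \<in> fa_ideal S R" shows "vscal c p \<in> fa_ideal S R"
proof -
  have "fa_mult (vscal c (sg [])) p \<in> fa_ideal S R"
    by (rule fa_ideal.lmult) (auto intro!: FA_scal FA_sg assms)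
  moreover have "fa_mult (vscal c (sg [])) p = vscal c p"
    using fa_ideal_FA[OF assms] by (simp add: fa_mult_scal_left fa_one_left FA_fsupp)
  ultimately show ?thesis by simp
qed
lemma ideal_neg: "R \<subseteq> FA S \<Longrightarrow> p \<in> fa_ideal S R \<Longrightarrow> - p \<in> fa_ideal S R"
  using ideal_scal[of R S p "-1"] by (simp add: vscal_m1)
lemma ideal_diff: "R \<subseteq> FA S \<Longrightarrow> p \<in> fa_ideal S R \<Longrightarrow> q \<in> fa_ideal S R \<Longrightarrow> p - q \<in> fa_ideal S R"
  using ideal_add[of p S R "- q"] ideal_neg[of R S q] by simp
lemma ideal_lmult: "a \<in> FA S \<Longrightarrow> p \<in> fa_ideal S R \<Longrightarrow> fa_mult a p \<in> fa_ideal S R"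
  by (rule fa_ideal.lmult)
lemma ideal_rmult: "a \<in> FA S \<Longrightarrow> p \<in> fa_ideal S R \<Longrightarrow> fa_mult p a \<in> fa_ideal S R"
  by (rule fa_ideal.rmult)
lemma ideal_comm_left: "R \<subseteq> FA S \<Longrightarrow> a \<in> FA S \<Longrightarrow> p \<in> fa_ideal S R \<Longrightarrow> fa_comm p a \<in> fa_ideal S R"
  by (simp add: fa_comm_eq ideal_diff ideal_lmult ideal_rmult)
lemma ideal_comm_right: "R \<subseteq> FA S \<Longrightarrow> a \<in> FA S \<Longrightarrow> p \<in> fa_ideal S R \<Longrightarrow> fa_comm a p \<in> fa_ideal S R"
  by (simp add: fa_comm_eq ideal_diff ideal_lmult ideal_rmult)

lemma ideal_mult_cong:
  assumes "R \<subseteq> FA S" "a \<in> FA S" "a' \<in> FA S" "b \<in> FA S" "b' \<in> FA S"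
    "a - a' \<in> fa_ideal S R" "b - b' \<in> fa_ideal S R"
  shows "fa_mult a b - fa_mult a' b' \<in> fa_ideal S R"
proof -
  have "fa_mult a b - fa_mult a' b' = fa_mult (a - a') b + fa_mult a' (b - b')"
    by (simp add: fa_mult_lin)
  then show ?thesis using assms by (simp add: ideal_add ideal_lmult ideal_rmult)
qed

lemma ideal_comm_cong:
  assumes "R \<subseteq> FA S" "a \<in> FA S" "a' \<in> FA S" "b \<in> FA S" "b' \<in> FA S"
    "a - a' \<in> fa_ideal S R" "b - b' \<in> fa_ideal S R"
  shows "fa_comm a b - fa_comm a' b' \<in> fa_ideal S R"
proof -
  have "fa_comm a b - fa_comm a' b' = (fa_mult a b - fa_mult a' b') - (fa_mult b a - fa_mult b' a')"
    by (simp add: fa_comm_eq)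
  then show ?thesis using assms by (simp add: ideal_diff ideal_mult_cong)
qed

primrec prodw :: "('x \<Rightarrow> 'y list \<Rightarrow> complex) \<Rightarrow> 'x list \<Rightarrow> 'y list \<Rightarrow> complex" where
  "prodw f [] = sg []"
| "prodw f (x # w) = fa_mult (f x) (prodw f w)"

definition subst :: "('x \<Rightarrow> 'y list \<Rightarrow> complex) \<Rightarrow> ('x list \<Rightarrow> complex) \<Rightarrow> 'y list \<Rightarrow> complex" where
  "subst f = lin (prodw f)"

lemma prodw_FA: "(\<forall>x\<in>set w. f x \<in> FA S') \<Longrightarrow> prodw f w \<in> FA S'"
  by (induction w) (auto intro: FA_sg)

lemma prodw_append: "(\<forall>x\<in>set (u @ v). f x \<in> FA S') \<Longrightarrow> prodw f (u @ v) = fa_mult (prodw f u) (prodw f v)"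
proof (induction u)
  case Nil then show ?case using prodw_FA[of v f S'] by (simp add: fa_one_left FA_fsupp)
next
  case (Cons x u)
  then show ?case using prodw_FA[of u f S'] prodw_FA[of v f S']
      FA_assoc[of "f x" S' "prodw f u" S' "prodw f v" S'] by simp
qed

lemma lin_FA:
  assumes "fsupp p" "\<forall>t. p t \<noteq> 0 \<longrightarrow> g t \<in> FA S'"
  shows "lin g p \<in> FA S'"
  using assms
proof (induction rule: fsupp_induct[where Q="\<lambda>t. g t \<in> FA S'"])
  case (step q c t) then show ?case by (simp add: lin_step)
qed auto

lemma subst_FA: "p \<in> FA S \<Longrightarrow> (\<forall>x\<in>S. f x \<in> FA S') \<Longrightarrow> subst f p \<in> FA S'"
  unfolding subst_def
proof (rule lin_FA)
  assume a: "p \<in> FA S" "\<forall>x\<in>S. f x \<in> FA S'"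
  show "fsupp p" using a by (simp add: FA_fsupp)
  show "\<forall>t. p t \<noteq> 0 \<longrightarrow> prodw f t \<in> FA S'"
    using a FA_D[OF a(1)] by (blast intro: prodw_FA)
qed

lemma subst_add: "fsupp p \<Longrightarrow> fsupp q \<Longrightarrow> subst f (p + q) = subst f p + subst f q"
  by (simp add: subst_def lin_add)
lemma subst_diff: "fsupp p \<Longrightarrow> fsupp q \<Longrightarrow> subst f (p - q) = subst f p - subst f q"
  by (simp add: subst_def lin_diff)
lemma subst_scal: "fsupp p \<Longrightarrow> subst f (vscal c p) = vscal c (subst f p)"
  by (simp add: subst_def lin_scal)
lemma subst_sg[simp]: "subst f (sg w) = prodw f w"
  by (simp add: subst_def)
lemma subst_zero[simp]: "subst f 0 = 0"
  by (simp add: subst_def)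

lemma subst_gen: "f x \<in> FA S' \<Longrightarrow> subst f (sg [x]) = f x"
  by (simp add: fa_one_right FA_fsupp)

lemma subst_mult:
  assumes "p \<in> FA S" "q \<in> FA S" "\<forall>x\<in>S. f x \<in> FA S'"
  shows "subst f (fa_mult p q) = fa_mult (subst f p) (subst f q)"
proof -
  have base: "subst f (fa_mult (sg u) q) = fa_mult (prodw f u) (subst f q)" if u: "set u \<subseteq> S" for u
    using FA_fsupp[OF assms(2)] FA_D[OF assms(2)]
  proof (induction rule: fsupp_induct[where Q="\<lambda>w. set w \<subseteq> S"])
    case (step q c t)
    have "fa_mult (sg u) (q + vscal c (sg t)) = fa_mult (sg u) q + vscal c (sg (u @ t))"
      by (simp add: fa_mult_lin fa_mult_sg)
    moreover have "subst f (sg (u @ t)) = fa_mult (prodw f u) (prodw f t)"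
      using step u assms(3) by (simp only: subst_sg, intro prodw_append[where S'=S']) auto
    ultimately show ?case using step
      by (simp add: subst_add subst_scal fa_mult_lin)
  qed auto
  show ?thesis
    using FA_fsupp[OF assms(1)] FA_D[OF assms(1)]
  proof (induction rule: fsupp_induct[where Q="\<lambda>w. set w \<subseteq> S"])
    case (step p' c t)
    have fq: "fsupp q" using assms(2) by (simp add: FA_fsupp)
    have "fa_mult (p' + vscal c (sg t)) q = fa_mult p' q + vscal c (fa_mult (sg t) q)"
      by (simp add: fa_mult_lin)
    then show ?case using step base[of t] fq
      by (simp add: subst_add subst_scal fa_mult_lin)
  qed auto
qed

lemma subst_comm:
  assumes "p \<in> FA S" "q \<in> FA S" "\<forall>x\<in>S. f x \<in> FA S'"
  shows "subst f (fa_comm p q) = fa_comm (subst f p) (subst f q)"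
  using assms by (simp add: fa_comm_eq subst_diff subst_mult FA_fsupp)



section \<open>Free magma algebra\<close>

lemma fm_mult_add_left: "fm_mult (p + q) r = fm_mult p r + fm_mult q r"
  by (simp add: fm_mult_def fun_eq_iff fun_apply_simps distrib_right split: mtree.split)
lemma fm_mult_add_right: "fm_mult r (p + q) = fm_mult r p + fm_mult r q"
  by (simp add: fm_mult_def fun_eq_iff fun_apply_simps distrib_left split: mtree.split)
lemma fm_mult_diff_left: "fm_mult (p - q) r = fm_mult p r - fm_mult q r"
  by (simp add: fm_mult_def fun_eq_iff fun_apply_simps left_diff_distrib split: mtree.split)
lemma fm_mult_diff_right: "fm_mult r (p - q) = fm_mult r p - fm_mult r q"
  by (simp add: fm_mult_def fun_eq_iff fun_apply_simps right_diff_distrib split: mtree.split)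
lemma fm_mult_scal_left: "fm_mult (vscal c p) r = vscal c (fm_mult p r)"
  by (simp add: fm_mult_def fun_eq_iff vscal_def split: mtree.split)
lemma fm_mult_scal_right: "fm_mult r (vscal c p) = vscal c (fm_mult r p)"
  by (simp add: fm_mult_def fun_eq_iff vscal_def split: mtree.split)
lemma fm_mult_zero_left[simp]: "fm_mult 0 r = 0"
  by (simp add: fm_mult_def fun_eq_iff fun_apply_simps split: mtree.split)
lemma fm_mult_zero_right[simp]: "fm_mult r 0 = 0"
  by (simp add: fm_mult_def fun_eq_iff fun_apply_simps split: mtree.split)
lemma fm_mult_neg_left: "fm_mult (- p) r = - fm_mult p r"
  using fm_mult_diff_left[of 0 p r] by simp
lemma fm_mult_neg_right: "fm_mult r (- p) = - fm_mult r p"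
  using fm_mult_diff_right[of r 0 p] by simp

lemmas fm_mult_lin = fm_mult_add_left fm_mult_add_right fm_mult_diff_left fm_mult_diff_right
  fm_mult_scal_left fm_mult_scal_right fm_mult_neg_left fm_mult_neg_right

lemma fm_mult_sg: "fm_mult (sg s) (sg t) = sg (Node s t)"
  by (simp add: fm_mult_def fun_eq_iff sg_def split: mtree.split)

lemma fm_mult_nonzero:
  assumes "fm_mult p q t \<noteq> 0"
  shows "\<exists>a b. t = Node a b \<and> p a \<noteq> 0 \<and> q b \<noteq> 0"
  using assms by (cases t) (auto simp: fm_mult_def)

lemma fsupp_fm_mult[simp]: "fsupp p \<Longrightarrow> fsupp q \<Longrightarrow> fsupp (fm_mult p q)"
  unfolding fsupp_def
  apply (rule finite_subset[of _ "(\<lambda>(a,b). Node a b) ` ({x. p x \<noteq> 0} \<times> {x. q x \<noteq> 0})"])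
   apply (auto dest!: fm_mult_nonzero)
  done

lemma fm_jacobi_eq: "fm_jacobi a b c = fm_mult (fm_mult a b) c + fm_mult (fm_mult b c) a + fm_mult (fm_mult c a) b"
  by (simp add: fm_jacobi_def vadd_eq)

lemma FM_fsupp: "p \<in> FM S \<Longrightarrow> fsupp p" by (simp add: FM_def)
lemma FM_D: "p \<in> FM S \<Longrightarrow> \<forall>t. p t \<noteq> 0 \<longrightarrow> set_mtree t \<subseteq> S" by (simp add: FM_def)
lemma FM_zero[simp]: "0 \<in> FM S" by (simp add: FM_def fun_apply_simps)
lemma FM_sg: "set_mtree t \<subseteq> S \<Longrightarrow> sg t \<in> FM S"
  by (simp add: FM_def) (simp add: sg_def)
lemma FM_add[simp]: assumes "p \<in> FM S" "q \<in> FM S" shows "p + q \<in> FM S"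
  unfolding FM_def proof (intro CollectI conjI allI impI)
  show "fsupp (p+q)" using assms by (simp add: FM_def)
  fix w assume "(p+q) w \<noteq> 0"
  then have "p w \<noteq> 0 \<or> q w \<noteq> 0" by (auto simp: fun_apply_simps)
  then show "set_mtree w \<subseteq> S" using assms by (auto simp: FM_def)
qed
lemma FM_diff[simp]: assumes "p \<in> FM S" "q \<in> FM S" shows "p - q \<in> FM S"
  unfolding FM_def proof (intro CollectI conjI allI impI)
  show "fsupp (p-q)" using assms by (simp add: FM_def)
  fix w assume "(p-q) w \<noteq> 0"
  then have "p w \<noteq> 0 \<or> q w \<noteq> 0" by (auto simp: fun_apply_simps)
  then show "set_mtree w \<subseteq> S" using assms by (auto simp: FM_def)
qed
lemma FM_scal[simp]: assumes "p \<in> FM S" shows "vscal c p \<in> FM S"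
  unfolding FM_def proof (intro CollectI conjI allI impI)
  show "fsupp (vscal c p)" using assms by (simp add: FM_def)
  fix w assume "vscal c p w \<noteq> 0"
  then have "p w \<noteq> 0" by (auto simp: vscal_def)
  then show "set_mtree w \<subseteq> S" using assms by (auto simp: FM_def)
qed
lemma FM_mult[simp]: assumes "p \<in> FM S" "q \<in> FM S" shows "fm_mult p q \<in> FM S"
  unfolding FM_def proof (intro CollectI conjI allI impI)
  show "fsupp (fm_mult p q)" using assms by (simp add: FM_def)
  fix w assume "fm_mult p q w \<noteq> 0"
  then obtain a b where "w = Node a b" "p a \<noteq> 0" "q b \<noteq> 0" by (blast dest: fm_mult_nonzero)
  then show "set_mtree w \<subseteq> S" using assms by (auto simp: FM_def)
qed

lemma lin_FM:
  assumes "fsupp p" "\<forall>t. p t \<noteq> 0 \<longrightarrow> g t \<in> FM S'"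
  shows "lin g p \<in> FM S'"
  using assms
proof (induction rule: fsupp_induct[where Q="\<lambda>t. g t \<in> FM S'"])
  case (step q c t) then show ?case by (simp add: lin_step)
qed auto

lemma lie_FM: assumes "p \<in> lie_ideal S" shows "p \<in> FM S"
  using assms by (induction rule: lie_ideal.induct) (auto simp: vzero_eq vadd_eq fm_jacobi_eq)

lemma lie_zero[simp]: "0 \<in> lie_ideal S" using lie_ideal.zero by (simp add: vzero_eq)
lemma lie_add: "p \<in> lie_ideal S \<Longrightarrow> q \<in> lie_ideal S \<Longrightarrow> p + q \<in> lie_ideal S"
  using lie_ideal.add by (simp add: vadd_eq)
lemma lie_scal: "p \<in> lie_ideal S \<Longrightarrow> vscal c p \<in> lie_ideal S"
  by (rule lie_ideal.scal)
lemma lie_neg: "p \<in> lie_ideal S \<Longrightarrow> - p \<in> lie_ideal S"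
  using lie_scal[of p S "-1"] by (simp add: vscal_m1)
lemma lie_diff: "p \<in> lie_ideal S \<Longrightarrow> q \<in> lie_ideal S \<Longrightarrow> p - q \<in> lie_ideal S"
  using lie_add[of p S "- q"] lie_neg[of q S] by simp
lemma lie_alt: "a \<in> FM S \<Longrightarrow> fm_mult a a \<in> lie_ideal S"
  by (rule lie_ideal.alt)
lemma lie_jac: "a \<in> FM S \<Longrightarrow> b \<in> FM S \<Longrightarrow> c \<in> FM S \<Longrightarrow>
   fm_mult (fm_mult a b) c + fm_mult (fm_mult b c) a + fm_mult (fm_mult c a) b \<in> lie_ideal S"
  using lie_ideal.jac[of a S b c] by (simp add: fm_jacobi_eq)
lemma lie_lmult: "a \<in> FM S \<Longrightarrow> p \<in> lie_ideal S \<Longrightarrow> fm_mult a p \<in> lie_ideal S"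
  by (rule lie_ideal.lmult)
lemma lie_rmult: "a \<in> FM S \<Longrightarrow> p \<in> lie_ideal S \<Longrightarrow> fm_mult p a \<in> lie_ideal S"
  by (rule lie_ideal.rmult)

section \<open>Commutator realisation\<close>

primrec lam :: "'x mtree \<Rightarrow> 'x list \<Rightarrow> complex" where
  "lam (Leaf k) = sg [k]"
| "lam (Node a b) = fa_comm (lam a) (lam b)"

lemma lam_FA: "set_mtree t \<subseteq> S \<Longrightarrow> lam t \<in> FA S"
  by (induction t) (auto intro: FA_sg)

lemma Lam_FA: "p \<in> FM S \<Longrightarrow> lin lam p \<in> FA S"
  by (rule lin_FA) (auto simp: FM_fsupp dest: FM_D intro: lam_FA)

lemma Lam_fsupp: "p \<in> FM S \<Longrightarrow> fsupp (lin lam p)"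
  using Lam_FA FA_fsupp by blast

lemma lam_fsupp: "fsupp (lam t)"
  using lam_FA[of t "set_mtree t"] FA_fsupp by blast

lemma Lam_fsupp': "fsupp p \<Longrightarrow> fsupp (lin lam p)"
proof -
  assume "fsupp p"
  then have "lin lam p \<in> FA UNIV"
    by (rule lin_FA) (auto intro: lam_FA)
  then show ?thesis by (rule FA_fsupp)
qed

lemma Lam_mult0:
  assumes "fsupp q"
  shows "lin lam (fm_mult (sg s) q) = fa_comm (lam s) (lin lam q)"
  using assms
proof (induction rule: fsupp_induct0)
  case (step q c t)
  have "fm_mult (sg s) (q + vscal c (sg t)) = fm_mult (sg s) q + vscal c (sg (Node s t))"
    by (simp add: fm_mult_lin fm_mult_sg)
  then show ?case using step
    by (simp add: lin_add lin_scal lin_step fa_comm_lin)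
qed simp

lemma Lam_mult:
  assumes "fsupp p" "fsupp q"
  shows "lin lam (fm_mult p q) = fa_comm (lin lam p) (lin lam q)"
  using assms(1)
proof (induction rule: fsupp_induct0)
  case (step p' c t)
  have "fm_mult (p' + vscal c (sg t)) q = fm_mult p' q + vscal c (fm_mult (sg t) q)"
    by (simp add: fm_mult_lin)
  then show ?case using step assms(2)
    by (simp add: lin_add lin_scal lin_step fa_comm_lin Lam_mult0)
qed simp

lemma Lam_ideal: assumes "p \<in> lie_ideal S" shows "lin lam p = 0"
  using assms
proof (induction rule: lie_ideal.induct)
  case zero then show ?case by (simp add: vzero_eq)
next
  case (add p q) then show ?case using lie_FM[OF add.hyps(1)] lie_FM[OF add.hyps(2)]
    by (simp add: vadd_eq lin_add FM_fsupp)
next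
  case (scal p c) then show ?case using lie_FM[OF scal.hyps(1)]
    by (simp add: lin_scal FM_fsupp)
next
  case (alt a) then show ?case by (simp add: Lam_mult FM_fsupp)
next
  case (jac a b c)
  have fa: "fsupp a" "fsupp b" "fsupp c" using jac by (simp_all add: FM_fsupp)
  have "lin lam (fm_jacobi a b c) = fa_comm (fa_comm (lin lam a) (lin lam b)) (lin lam c)
     + fa_comm (fa_comm (lin lam b) (lin lam c)) (lin lam a) + fa_comm (fa_comm (lin lam c) (lin lam a)) (lin lam b)"
    using fa by (simp add: fm_jacobi_eq lin_add Lam_mult)
  then show ?case using fa by (simp add: fa_jacobi Lam_fsupp')
next
  case (lmult a p) then show ?case using lie_FM[OF lmult.hyps(2)]
    by (simp add: Lam_mult FM_fsupp)
next
  case (rmult a p) then show ?case using lie_FM[OF rmult.hyps(2)]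
    by (simp add: Lam_mult FM_fsupp)
qed

lemma Lam_cong: "p \<in> FM S \<Longrightarrow> q \<in> FM S \<Longrightarrow> p - q \<in> lie_ideal S \<Longrightarrow> lin lam p = lin lam q"
  using Lam_ideal[of "p - q" S] by (simp add: lin_diff FM_fsupp)



section \<open>Derivation\<close>

lemma fm_der_lin: "fm_der p = lin dtree p"
  by (simp add: fm_der_def lin_def supp_def)

lemma dtree_fsupp: "fsupp (dtree t)"
  by (induction t) (auto simp: fm_single_sg vadd_eq vzero_eq)

lemma dtree_FM: "set_mtree t \<subseteq> S3 \<Longrightarrow> dtree t \<in> FM S3"
  by (induction t) (auto simp: fm_single_sg vadd_eq vzero_eq S3_def intro!: FM_add FM_mult FM_sg)

lemma der_add: "fsupp p \<Longrightarrow> fsupp q \<Longrightarrow> fm_der (p + q) = fm_der p + fm_der q"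
  by (simp add: fm_der_lin lin_add)
lemma der_diff: "fsupp p \<Longrightarrow> fsupp q \<Longrightarrow> fm_der (p - q) = fm_der p - fm_der q"
  by (simp add: fm_der_lin lin_diff)
lemma der_scal: "fsupp p \<Longrightarrow> fm_der (vscal c p) = vscal c (fm_der p)"
  by (simp add: fm_der_lin lin_scal)
lemma der_sg[simp]: "fm_der (sg t) = dtree t"
  by (simp add: fm_der_lin)
lemma der_zero[simp]: "fm_der 0 = 0"
  by (simp add: fm_der_lin)

lemma der_fsupp: "fsupp p \<Longrightarrow> fsupp (fm_der p)"
proof -
  assume "fsupp p"
  then have "lin dtree p \<in> FM UNIV"
    by (rule lin_FM) (auto simp: FM_def dtree_fsupp)
  then show ?thesis by (simp add: FM_fsupp fm_der_lin)
qed

lemma der_FM: "p \<in> FM S3 \<Longrightarrow> fm_der p \<in> FM S3"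
  unfolding fm_der_lin
  by (rule lin_FM) (auto simp: FM_fsupp dest: FM_D intro: dtree_FM)

lemma der_mult0:
  assumes "fsupp q"
  shows "fm_der (fm_mult (sg s) q) = fm_mult (dtree s) q + fm_mult (sg s) (fm_der q)"
  using assms
proof (induction rule: fsupp_induct0)
  case (step q c t)
  have e: "fm_mult (sg s) (q + vscal c (sg t)) = fm_mult (sg s) q + vscal c (sg (Node s t))"
    by (simp add: fm_mult_lin fm_mult_sg)
  have "fm_der (fm_mult (sg s) (q + vscal c (sg t))) =
      fm_der (fm_mult (sg s) q) + vscal c (dtree (Node s t))"
    unfolding e using step by (simp add: der_add der_scal)
  also have "\<dots> = fm_mult (dtree s) (q + vscal c (sg t)) + fm_mult (sg s) (fm_der (q + vscal c (sg t)))"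
    using step by (simp add: fm_mult_lin der_add der_scal fm_single_sg vadd_eq vscal_add add_ac)
  finally show ?case .
qed simp

lemma der_mult:
  assumes "fsupp p" "fsupp q"
  shows "fm_der (fm_mult p q) = fm_mult (fm_der p) q + fm_mult p (fm_der q)"
  using assms(1)
proof (induction rule: fsupp_induct0)
  case (step p' c t)
  have e: "fm_mult (p' + vscal c (sg t)) q = fm_mult p' q + vscal c (fm_mult (sg t) q)"
    by (simp add: fm_mult_lin)
  have "fm_der (fm_mult (p' + vscal c (sg t)) q) = fm_der (fm_mult p' q) + vscal c (fm_der (fm_mult (sg t) q))"
    unfolding e using step assms(2) by (simp add: der_add der_scal)
  also have "\<dots> = fm_mult (fm_der (p' + vscal c (sg t))) q + fm_mult (p' + vscal c (sg t)) (fm_der q)"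
    using step assms(2) by (simp add: der_mult0 fm_mult_lin der_add der_scal vscal_add add_ac)
  finally show ?case .
qed simp

lemma der_ideal: assumes "p \<in> lie_ideal S3" shows "fm_der p \<in> lie_ideal S3"
  using assms
proof (induction rule: lie_ideal.induct)
  case zero then show ?case by (simp add: vzero_eq)
next
  case (add p q) then show ?case using lie_FM[OF add.hyps(1)] lie_FM[OF add.hyps(2)]
    by (simp add: vadd_eq der_add FM_fsupp lie_add)
next
  case (scal p c) then show ?case using lie_FM[OF scal.hyps(1)]
    by (simp add: der_scal FM_fsupp lie_scal)
next
  case (alt a)
  have fa: "fsupp a" using alt by (simp add: FM_fsupp)
  have da: "fm_der a \<in> FM S3" using alt by (simp add: der_FM)
  have "fm_der (fm_mult a a) = fm_mult (a + fm_der a) (a + fm_der a) - fm_mult a a - fm_mult (fm_der a) (fm_der a)"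
    using fa by (simp add: der_mult fm_mult_lin)
  moreover have "\<dots> \<in> lie_ideal S3"
    using alt da by (intro lie_diff lie_alt) auto
  ultimately show ?case by simp
next
  case (jac a b c)
  have f: "fsupp a" "fsupp b" "fsupp c" using jac by (simp_all add: FM_fsupp)
  have d: "fm_der a \<in> FM S3" "fm_der b \<in> FM S3" "fm_der c \<in> FM S3" using jac by (simp_all add: der_FM)
  have fd: "fsupp (fm_der a)" "fsupp (fm_der b)" "fsupp (fm_der c)" using d by (simp_all add: FM_fsupp)
  have "fm_der (fm_jacobi a b c) = fm_jacobi (fm_der a) b c + fm_jacobi a (fm_der b) c + fm_jacobi a b (fm_der c)"
    using f fd by (simp add: fm_jacobi_eq der_add der_mult fm_mult_lin add_ac)
  moreover have "\<dots> \<in> lie_ideal S3"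
    using jac d by (simp add: vadd_eq[symmetric] lie_ideal.add lie_ideal.jac)
  ultimately show ?case by simp
next
  case (lmult a p)
  have "fm_der (fm_mult a p) = fm_mult (fm_der a) p + fm_mult a (fm_der p)"
    using lmult lie_FM[OF lmult.hyps(2)] by (simp add: der_mult FM_fsupp)
  then show ?case using lmult by (simp add: lie_add lie_lmult der_FM)
next
  case (rmult a p)
  have "fm_der (fm_mult p a) = fm_mult (fm_der p) a + fm_mult p (fm_der a)"
    using rmult lie_FM[OF rmult.hyps(2)] by (simp add: der_mult FM_fsupp)
  then show ?case using rmult by (simp add: lie_add lie_rmult der_FM)
qed

lemma cls_mem: "p \<in> FM S \<Longrightarrow> p \<in> fl_class S p"
  by (simp add: fl_class_def vdiff_eq)

lemma rep_cls:
  assumes "p \<in> FM S"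
  shows "fl_rep (fl_class S p) \<in> FM S" "fl_rep (fl_class S p) - p \<in> lie_ideal S"
proof -
  have "fl_rep (fl_class S p) \<in> fl_class S p"
    unfolding fl_rep_def using cls_mem[OF assms] by (rule someI[where P="\<lambda>x. x \<in> fl_class S p"])
  then show "fl_rep (fl_class S p) \<in> FM S" "fl_rep (fl_class S p) - p \<in> lie_ideal S"
    by (simp_all add: fl_class_def vdiff_eq)
qed

lemma cls_eq:
  assumes "p \<in> FM S" "q \<in> FM S" "p - q \<in> lie_ideal S"
  shows "fl_class S p = fl_class S q"
proof -
  have "r - p \<in> lie_ideal S \<longleftrightarrow> r - q \<in> lie_ideal S" for r
  proof
    assume "r - p \<in> lie_ideal S"
    from lie_add[OF this assms(3)] show "r - q \<in> lie_ideal S" by simp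
  next
    assume "r - q \<in> lie_ideal S"
    from lie_diff[OF this assms(3)] show "r - p \<in> lie_ideal S" by simp
  qed
  then show ?thesis by (simp add: fl_class_def vdiff_eq)
qed

lemma fl_add_cls: "p \<in> FM S \<Longrightarrow> q \<in> FM S \<Longrightarrow> fl_add S (fl_class S p) (fl_class S q) = fl_class S (p + q)"
  unfolding fl_add_def vadd_eq
  apply (rule cls_eq)
  using rep_cls[of p S] rep_cls[of q S]
    apply simp_all
  using lie_add[of "fl_rep (fl_class S p) - p" S "fl_rep (fl_class S q) - q"]
  apply (simp add: algebra_simps)
  done

lemma fl_scal_cls: "p \<in> FM S \<Longrightarrow> fl_scal S c (fl_class S p) = fl_class S (vscal c p)"
  unfolding fl_scal_def
  apply (rule cls_eq)
  using rep_cls[of p S]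
    apply simp_all
  using lie_scal[of "fl_rep (fl_class S p) - p" S c]
  apply (simp add: vscal_diff)
  done

lemma fl_bracket_cls: "p \<in> FM S \<Longrightarrow> q \<in> FM S \<Longrightarrow>
   fl_bracket S (fl_class S p) (fl_class S q) = fl_class S (fm_mult p q)"
proof -
  assume a: "p \<in> FM S" "q \<in> FM S"
  let ?rp = "fl_rep (fl_class S p)" and ?rq = "fl_rep (fl_class S q)"
  have e: "fm_mult ?rp ?rq - fm_mult p q = fm_mult (?rp - p) ?rq + fm_mult p (?rq - q)"
    by (simp add: fm_mult_lin)
  show ?thesis
    unfolding fl_bracket_def
    apply (rule cls_eq)
    using rep_cls[OF a(1)] rep_cls[OF a(2)] a
      apply simp_all
    unfolding e
    apply (rule lie_add)
     apply (rule lie_rmult)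
      apply auto[2]
    apply (rule lie_lmult)
     apply auto
    done
qed

lemma fl_delta_cls: "p \<in> FM S3 \<Longrightarrow> fl_delta (fl_class S3 p) = fl_class S3 (fm_der p)"
proof -
  assume a: "p \<in> FM S3"
  let ?rp = "fl_rep (fl_class S3 p)"
  have "fm_der ?rp - fm_der p = fm_der (?rp - p)"
    using rep_cls[OF a] a by (simp add: der_diff FM_fsupp)
  then show ?thesis
    unfolding fl_delta_def
    using rep_cls[OF a] a by (intro cls_eq) (simp_all add: der_FM der_ideal)
qed

lemma FL_iff: "X \<in> FL S \<longleftrightarrow> (\<exists>p\<in>FM S. X = fl_class S p)"
  by (auto simp: FL_def)

abbreviation cls3 where "cls3 \<equiv> fl_class S3"

lemma g_add_cls: "p \<in> FM S3 \<Longrightarrow> q \<in> FM S3 \<Longrightarrow> g_add (c, cls3 p) (d, cls3 q) = (c + d, cls3 (p + q))"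
  by (simp add: g_add_def fl_add_cls)

lemma g_scal_cls: "p \<in> FM S3 \<Longrightarrow> g_scal a (c, cls3 p) = (a * c, cls3 (vscal a p))"
  by (simp add: g_scal_def fl_scal_cls)

lemma g_bracket_cls: "p \<in> FM S3 \<Longrightarrow> q \<in> FM S3 \<Longrightarrow>
  g_bracket (c, cls3 p) (d, cls3 q) = (0, cls3 (vscal c (fm_der q) + vscal (-d) (fm_der p) + fm_mult p q))"
  by (simp add: g_bracket_def fl_delta_cls fl_scal_cls fl_add_cls fl_bracket_cls der_FM)

lemma gcar_iff: "u \<in> gcar \<longleftrightarrow> (\<exists>c p. p \<in> FM S3 \<and> u = (c, cls3 p))"
  by (cases u) (auto simp: gcar_def FL_iff)

lemma gcar_cls[simp]: "p \<in> FM S3 \<Longrightarrow> (c, cls3 p) \<in> gcar"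
  by (auto simp: gcar_iff)

lemma g_delta_cls: "g_delta = (1, cls3 0)"
  by (simp add: g_delta_def fl_zero_def vzero_eq)

lemma g_gen_cls: "g_gen k = (0, cls3 (sg (Leaf k)))"
  by (simp add: g_gen_def fm_single_sg)



abbreviation SA :: "nat set" where "SA \<equiv> {0,1,2,3}"

lemma FA_mono: "p \<in> FA S \<Longrightarrow> S \<subseteq> T \<Longrightarrow> p \<in> FA T"
  by (auto simp: FA_def)

lemma S3_SA: "S3 \<subseteq> SA" by (auto simp: S3_def)

lemma Aplus_rels_FA: "Aplus_rels \<subseteq> FA SA"
  unfolding Aplus_rels_def cyc_def fa_gen_sg vdiff_eq by (auto intro!: FA_diff FA_comm FA_sg)

lemma I_def': "Aplus_ideal = fa_ideal SA Aplus_rels" by (simp add: Aplus_ideal_def)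

lemma rel_mem:
  assumes "(k, l, m) \<in> cyc"
  shows "fa_comm (sg [0]) (sg [k]) - fa_comm (sg [l]) (sg [m]) \<in> Aplus_ideal"
proof -
  have "vdiff (fa_comm (fa_gen 0) (fa_gen k)) (fa_comm (fa_gen l) (fa_gen m)) \<in> Aplus_rels"
    unfolding Aplus_rels_def using assms by blast
  then show ?thesis unfolding Aplus_ideal_def by (auto simp: vdiff_eq fa_gen_sg intro: fa_ideal.gen)
qed

lemma Lam_FA3: "p \<in> FM S3 \<Longrightarrow> lin lam p \<in> FA SA"
  using Lam_FA FA_mono S3_SA by blast

lemma lam_FA3: "set_mtree t \<subseteq> S3 \<Longrightarrow> lam t \<in> FA SA"
  using lam_FA FA_mono S3_SA by blast

lemma K0:
  assumes "set_mtree t \<subseteq> S3"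
  shows "fa_comm (sg [0]) (lam t) - lin lam (dtree t) \<in> Aplus_ideal"
  using assms
proof (induction t)
  case (Leaf k)
  then have "k = 1 \<or> k = 2 \<or> k = 3" by (simp add: S3_def)
  then show ?case
  proof (elim disjE)
    assume "k = 1" then show ?thesis
      using rel_mem[of 1 2 3] by (simp add: cyc_def fm_single_sg)
  next
    assume "k = 2" then show ?thesis
      using rel_mem[of 2 3 1] by (simp add: cyc_def fm_single_sg)
  next
    assume "k = 3" then show ?thesis
      using rel_mem[of 3 1 2] by (simp add: cyc_def fm_single_sg)
  qed
next
  case (Node a b)
  have sa: "set_mtree a \<subseteq> S3" and sb: "set_mtree b \<subseteq> S3" using Node.prems by auto
  have da: "dtree a \<in> FM S3" and db: "dtree b \<in> FM S3" using sa sb by (simp_all add: dtree_FM)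
  have la: "lam a \<in> FA SA" and lb: "lam b \<in> FA SA" using lam_FA3[OF sa] lam_FA3[OF sb] by simp_all
  have g0: "sg [0] \<in> FA SA" by (simp add: FA_sg)
  have Lda: "lin lam (dtree a) \<in> FA SA" and Ldb: "lin lam (dtree b) \<in> FA SA"
    using Lam_FA3[OF da] Lam_FA3[OF db] by simp_all
  have e1: "lin lam (dtree (Node a b)) = fa_comm (lin lam (dtree a)) (lam b) + fa_comm (lam a) (lin lam (dtree b))"
    by (simp add: vadd_eq fm_single_sg lin_add Lam_mult dtree_fsupp)
  have e2: "fa_comm (sg [0]) (lam (Node a b)) = fa_comm (fa_comm (sg [0]) (lam a)) (lam b) + fa_comm (lam a) (fa_comm (sg [0]) (lam b))"
    using fa_comm_leibniz[of "sg [0]" "lam a" "lam b"] by (simp add: lam_fsupp)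
  have "fa_comm (sg [0]) (lam (Node a b)) - lin lam (dtree (Node a b)) =
     fa_comm (fa_comm (sg [0]) (lam a) - lin lam (dtree a)) (lam b) +
     fa_comm (lam a) (fa_comm (sg [0]) (lam b) - lin lam (dtree b))"
    unfolding e1 e2 by (simp add: fa_comm_lin)
  also have "\<dots> \<in> Aplus_ideal"
    unfolding I_def'
    using Node.IH sa sb la lb Aplus_rels_FA
    by (intro ideal_add ideal_comm_left ideal_comm_right) (auto simp: I_def')
  finally show ?case .
qed

lemma K:
  assumes "q \<in> FM S3"
  shows "fa_comm (sg [0]) (lin lam q) - lin lam (fm_der q) \<in> Aplus_ideal"
  using FM_fsupp[OF assms] FM_D[OF assms]
proof (induction rule: fsupp_induct[where Q="\<lambda>t. set_mtree t \<subseteq> S3"])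
  case zero then show ?case by (simp add: I_def')
next
  case (step q c t)
  have "fa_comm (sg [0]) (lin lam (q + vscal c (sg t))) - lin lam (fm_der (q + vscal c (sg t)))
     = (fa_comm (sg [0]) (lin lam q) - lin lam (fm_der q)) + vscal c (fa_comm (sg [0]) (lam t) - lin lam (dtree t))"
    using step by (simp add: lin_step der_add der_scal fa_comm_lin lin_add lin_scal der_fsupp dtree_fsupp vscal_diff)
  also have "\<dots> \<in> Aplus_ideal"
    unfolding I_def' using step K0[of t] Aplus_rels_FA
    by (intro ideal_add ideal_scal) (auto simp: I_def')
  finally show ?case .
qed



definition letter :: "nat \<Rightarrow> gelt" where "letter x = (if x = 0 then g_delta else g_gen x)"
definition fphi :: "nat \<Rightarrow> gelt list \<Rightarrow> complex" where "fphi x = sg [letter x]"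
definition gpsi :: "gelt \<Rightarrow> nat list \<Rightarrow> complex" where
  "gpsi u = vscal (fst u) (sg [0]) + lin lam (fl_rep (snd u))"

lemma J_def': "U_ideal = fa_ideal gcar U_rels" by (simp add: U_ideal_def)

lemma g_add_gcar: assumes "u \<in> gcar" "v \<in> gcar" shows "g_add u v \<in> gcar"
proof -
  obtain c p where p: "p \<in> FM S3" "u = (c, cls3 p)" using assms(1) by (auto simp: gcar_iff)
  obtain d q where q: "q \<in> FM S3" "v = (d, cls3 q)" using assms(2) by (auto simp: gcar_iff)
  show ?thesis using p q by (simp add: g_add_cls)
qed
lemma g_scal_gcar: assumes "u \<in> gcar" shows "g_scal c u \<in> gcar"
proof -
  obtain d p where p: "p \<in> FM S3" "u = (d, cls3 p)" using assms(1) by (auto simp: gcar_iff)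
  show ?thesis using p by (simp add: g_scal_cls)
qed
lemma g_bracket_gcar: assumes "u \<in> gcar" "v \<in> gcar" shows "g_bracket u v \<in> gcar"
proof -
  obtain c p where p: "p \<in> FM S3" "u = (c, cls3 p)" using assms(1) by (auto simp: gcar_iff)
  obtain d q where q: "q \<in> FM S3" "v = (d, cls3 q)" using assms(2) by (auto simp: gcar_iff)
  show ?thesis using p q by (simp add: g_bracket_cls der_FM)
qed

lemma U_rels_FA: "U_rels \<subseteq> FA gcar"
proof (intro subsetI)
  fix x assume "x \<in> U_rels"
  then consider (a) u v where "x = vdiff (fa_gen (g_add u v)) (vadd (fa_gen u) (fa_gen v))" "u \<in> gcar" "v \<in> gcar"
    | (b) c u where "x = vdiff (fa_gen (g_scal c u)) (vscal c (fa_gen u))" "u \<in> gcar"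
    | (c) u v where "x = vdiff (fa_comm (fa_gen u) (fa_gen v)) (fa_gen (g_bracket u v))" "u \<in> gcar" "v \<in> gcar"
    unfolding U_rels_def by blast
  then show "x \<in> FA gcar"
  proof cases
    case a then show ?thesis
      by (simp add: fa_gen_sg vdiff_eq vadd_eq FA_sg g_add_gcar)
  next
    case b then show ?thesis
      by (simp add: fa_gen_sg vdiff_eq FA_sg g_scal_gcar)
  next
    case c then show ?thesis
      by (simp add: fa_gen_sg vdiff_eq FA_sg g_bracket_gcar)
  qed
qed

lemma J_add: assumes "u \<in> gcar" "v \<in> gcar" shows "sg [g_add u v] - (sg [u] + sg [v]) \<in> U_ideal"
proof -
  have "vdiff (fa_gen (g_add u v)) (vadd (fa_gen u) (fa_gen v)) \<in> U_rels"
    unfolding U_rels_def using assms by blast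
  then show ?thesis unfolding J_def' by (auto simp: fa_gen_sg vdiff_eq vadd_eq intro: fa_ideal.gen)
qed
lemma J_scal: assumes "u \<in> gcar" shows "sg [g_scal c u] - vscal c (sg [u]) \<in> U_ideal"
proof -
  have "vdiff (fa_gen (g_scal c u)) (vscal c (fa_gen u)) \<in> U_rels"
    unfolding U_rels_def using assms by blast
  then show ?thesis unfolding J_def' by (auto simp: fa_gen_sg vdiff_eq intro: fa_ideal.gen)
qed
lemma J_br: assumes "u \<in> gcar" "v \<in> gcar" shows "fa_comm (sg [u]) (sg [v]) - sg [g_bracket u v] \<in> U_ideal"
proof -
  have "vdiff (fa_comm (fa_gen u) (fa_gen v)) (fa_gen (g_bracket u v)) \<in> U_rels"
    unfolding U_rels_def using assms by blast
  then show ?thesis unfolding J_def' by (auto simp: fa_gen_sg vdiff_eq intro: fa_ideal.gen)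
qed

lemma sg_Leaf_FM: "k \<in> S3 \<Longrightarrow> sg (Leaf k) \<in> FM S3"
  by (rule FM_sg) simp

lemma letter_gcar: assumes "x \<in> SA" shows "letter x \<in> gcar"
proof (cases "x = 0")
  case True then show ?thesis by (simp add: letter_def g_delta_cls)
next
  case False
  then have "x \<in> S3" using assms by (auto simp: S3_def)
  then show ?thesis using False by (simp add: letter_def g_gen_cls sg_Leaf_FM)
qed

lemma fphi_FA: "\<forall>x\<in>SA. fphi x \<in> FA gcar"
  by (auto simp: fphi_def intro!: FA_sg letter_gcar)

lemma gpsi_cls: "p \<in> FM S3 \<Longrightarrow> gpsi (c, cls3 p) = vscal c (sg [0]) + lin lam p"
  using rep_cls[of p S3] Lam_cong[of "fl_rep (cls3 p)" S3 p] by (simp add: gpsi_def)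

lemma gpsi_FA: "\<forall>u\<in>gcar. gpsi u \<in> FA SA"
proof
  fix u assume "u \<in> gcar"
  then obtain c p where p: "p \<in> FM S3" "u = (c, cls3 p)" by (auto simp: gcar_iff)
  show "gpsi u \<in> FA SA" using p Lam_FA3[OF p(1)] by (simp add: gpsi_cls FA_sg)
qed

abbreviation "PHI \<equiv> subst fphi"
abbreviation "PSI \<equiv> subst gpsi"

lemma phi_FA: "p \<in> FA SA \<Longrightarrow> PHI p \<in> FA gcar"
  using subst_FA fphi_FA by blast
lemma psi_FA: "q \<in> FA gcar \<Longrightarrow> PSI q \<in> FA SA"
  using subst_FA gpsi_FA by blast

lemma phi_gen: "x \<in> SA \<Longrightarrow> PHI (sg [x]) = sg [letter x]"
  by (simp add: fphi_def fa_mult_sg)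

lemma psi_gen: assumes "u \<in> gcar" shows "PSI (sg [u]) = gpsi u"
proof -
  have "gpsi u \<in> FA SA" using assms gpsi_FA by blast
  then show ?thesis by (simp add: fa_one_right FA_fsupp)
qed

lemma S1: assumes "p \<in> Aplus_ideal" shows "PHI p \<in> U_ideal"
  using assms[unfolded I_def']
proof (induction rule: fa_ideal.induct)
  case zero then show ?case by (simp add: vzero_eq J_def')
next
  case (gen r)
  then obtain k l m where r: "r = fa_comm (sg [0]) (sg [k]) - fa_comm (sg [l]) (sg [m])" and c: "(k,l,m) \<in> cyc"
    by (auto simp: Aplus_rels_def vdiff_eq fa_gen_sg)
  have kS: "k \<in> S3" "l \<in> S3" "m \<in> S3" "k \<noteq> 0" "l \<noteq> 0" "m \<noteq> 0" using c by (auto simp: cyc_def S3_def)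
  have inSA: "k \<in> SA" "l \<in> SA" "m \<in> SA" using c by (auto simp: cyc_def)
  have FA0: "sg [0::nat] \<in> FA SA" "sg [k] \<in> FA SA" "sg [l] \<in> FA SA" "sg [m] \<in> FA SA"
    using inSA by (auto intro!: FA_sg)
  have "PHI r = fa_comm (sg [g_delta]) (sg [g_gen k]) - fa_comm (sg [g_gen l]) (sg [g_gen m])"
  proof -
    have c1: "PHI (fa_comm (sg [0]) (sg [k])) = fa_comm (PHI (sg [0])) (PHI (sg [k]))"
      by (rule subst_comm[OF FA0(1) FA0(2) fphi_FA])
    have c2: "PHI (fa_comm (sg [l]) (sg [m])) = fa_comm (PHI (sg [l])) (PHI (sg [m]))"
      by (rule subst_comm[OF FA0(3) FA0(4) fphi_FA])
    have f: "fsupp (fa_comm (sg [0::nat]) (sg [k]))" "fsupp (fa_comm (sg [l]) (sg [m]))"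
      by (simp_all add: fa_comm_eq)
    show ?thesis unfolding r subst_diff[OF f] c1 c2 using inSA kS
      by (simp add: fphi_def fa_mult_sg letter_def)
  qed
  moreover have "g_bracket g_delta (g_gen k) = g_bracket (g_gen l) (g_gen m)"
  proof -
    have "g_bracket g_delta (g_gen k) = (0, cls3 (dtree (Leaf k)))"
      unfolding g_delta_cls g_gen_cls using sg_Leaf_FM[OF kS(1)]
      by (simp add: g_bracket_cls)
    moreover have "g_bracket (g_gen l) (g_gen m) = (0, cls3 (sg (Node (Leaf l) (Leaf m))))"
      unfolding g_gen_cls using sg_Leaf_FM[OF kS(2)] sg_Leaf_FM[OF kS(3)]
      by (simp add: g_bracket_cls fm_mult_sg)
    moreover have "dtree (Leaf k) = sg (Node (Leaf l) (Leaf m))"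
      using c by (auto simp: cyc_def fm_single_sg)
    ultimately show ?thesis by simp
  qed
  moreover have L: "letter 0 \<in> gcar" "letter k \<in> gcar" "letter l \<in> gcar" "letter m \<in> gcar"
    using inSA by (auto intro!: letter_gcar)
  moreover have gc: "g_delta \<in> gcar" "g_gen k \<in> gcar" "g_gen l \<in> gcar" "g_gen m \<in> gcar"
    using L kS by (simp_all add: letter_def)
  ultimately have "PHI r = (fa_comm (sg [g_delta]) (sg [g_gen k]) - sg [g_bracket g_delta (g_gen k)])
      - (fa_comm (sg [g_gen l]) (sg [g_gen m]) - sg [g_bracket (g_gen l) (g_gen m)])"
    by simp
  also have "\<dots> \<in> U_ideal"
    unfolding J_def'
    by (rule ideal_diff[OF U_rels_FA J_br[OF gc(1) gc(2), unfolded J_def'] J_br[OF gc(3) gc(4), unfolded J_def']])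
  finally show ?case unfolding J_def' .
next
  case (add p q)
  have "p \<in> FA SA" "q \<in> FA SA" using add.hyps Aplus_rels_FA by (auto intro: fa_ideal_FA)
  then show ?case using add.IH by (simp add: vadd_eq subst_add FA_fsupp ideal_add J_def')
next
  case (lmult a p)
  have "p \<in> FA SA" using lmult.hyps Aplus_rels_FA by (auto intro: fa_ideal_FA)
  then show ?case using lmult fphi_FA phi_FA by (simp add: subst_mult ideal_lmult J_def')
next
  case (rmult a p)
  have "p \<in> FA SA" using rmult.hyps Aplus_rels_FA by (auto intro: fa_ideal_FA)
  then show ?case using rmult fphi_FA phi_FA by (simp add: subst_mult ideal_rmult J_def')
qed



declare subst_sg[simp del]

lemma vscal_uminus: "vscal c (- p) = - vscal c p" by (simp add: vscal_def fun_eq_iff fun_apply_simps)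

lemma fa_comm_anti: "fa_comm a b = - fa_comm b a"
  by (simp add: fa_comm_eq)

lemma gpsi_cls': "p \<in> FM S3 \<Longrightarrow> gpsi (c, cls3 p) = vscal c (sg [0]) + lin lam p"
  by (rule gpsi_cls)

lemma sg_u_FA: "u \<in> gcar \<Longrightarrow> sg [u] \<in> FA gcar" by (simp add: FA_sg)

lemma S2: assumes "q \<in> U_ideal" shows "PSI q \<in> Aplus_ideal"
  using assms[unfolded J_def']
proof (induction rule: fa_ideal.induct)
  case zero then show ?case by (simp add: vzero_eq I_def')
next
  case (gen r)
  then consider (a) u v where "r = sg [g_add u v] - (sg [u] + sg [v])" "u \<in> gcar" "v \<in> gcar"
    | (b) c u where "r = sg [g_scal c u] - vscal c (sg [u])" "u \<in> gcar"
    | (c) u v where "r = fa_comm (sg [u]) (sg [v]) - sg [g_bracket u v]" "u \<in> gcar" "v \<in> gcar"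
    unfolding U_rels_def fa_gen_sg vdiff_eq vadd_eq by blast
  then show ?case
  proof cases
    case a
    obtain c p where p: "p \<in> FM S3" "u = (c, cls3 p)" using a by (auto simp: gcar_iff)
    obtain d q where q: "q \<in> FM S3" "v = (d, cls3 q)" using a by (auto simp: gcar_iff)
    have "PSI r = gpsi (g_add u v) - (gpsi u + gpsi v)"
      using a by (simp add: subst_diff subst_add psi_gen g_add_gcar)
    also have "\<dots> = 0"
      using p q by (simp add: g_add_cls gpsi_cls lin_add FM_fsupp vscal_addc algebra_simps)
    finally show ?thesis by (simp add: I_def')
  next
    case b
    obtain d p where p: "p \<in> FM S3" "u = (d, cls3 p)" using b by (auto simp: gcar_iff)
    have "PSI r = gpsi (g_scal c u) - vscal c (gpsi u)"
      using b by (simp add: subst_diff subst_scal psi_gen g_scal_gcar)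
    also have "\<dots> = 0"
      using p by (simp add: g_scal_cls gpsi_cls lin_scal FM_fsupp vscal_add vscal_vscal)
    finally show ?thesis by (simp add: I_def')
  next
    case c
    obtain a p where p: "p \<in> FM S3" "u = (a, cls3 p)" using c by (auto simp: gcar_iff)
    obtain d q where q: "q \<in> FM S3" "v = (d, cls3 q)" using c by (auto simp: gcar_iff)
    have gu: "gpsi u \<in> FA SA" "gpsi v \<in> FA SA" using c gpsi_FA by auto
    have "PSI r = fa_comm (gpsi u) (gpsi v) - gpsi (g_bracket u v)"
      using c subst_comm[OF sg_u_FA[of u] sg_u_FA[of v] gpsi_FA]
      by (simp add: subst_diff fa_comm_eq psi_gen g_bracket_gcar)
    also have "\<dots> = vscal a (fa_comm (sg [0]) (lin lam q) - lin lam (fm_der q))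
                  - vscal d (fa_comm (sg [0]) (lin lam p) - lin lam (fm_der p))"
    proof -
      have fp: "fsupp p" "fsupp q" "fsupp (fm_der p)" "fsupp (fm_der q)"
        using p q by (simp_all add: FM_fsupp der_fsupp)
      have L: "lin lam (vscal a (fm_der q) + vscal (- d) (fm_der p) + fm_mult p q)
          = vscal a (lin lam (fm_der q)) - vscal d (lin lam (fm_der p)) + fa_comm (lin lam p) (lin lam q)"
        using fp by (simp add: lin_add lin_diff lin_scal Lam_mult vscal_neg)
      have A: "fa_comm (lin lam p) (sg [0]) = - fa_comm (sg [0]) (lin lam p)"
        by (rule fa_comm_anti)
      have Gfm: "vscal a (fm_der q) + vscal (- d) (fm_der p) + fm_mult p q \<in> FM S3"
        using p q by (simp add: der_FM)
      have G: "gpsi (g_bracket u v) = vscal a (lin lam (fm_der q)) - vscal d (lin lam (fm_der p)) + fa_comm (lin lam p) (lin lam q)"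
        unfolding p(2) q(2) g_bracket_cls[OF p(1) q(1)] gpsi_cls[OF Gfm] L by simp
      have U: "gpsi u = vscal a (sg [0]) + lin lam p" using p by (simp add: gpsi_cls)
      have V: "gpsi v = vscal d (sg [0]) + lin lam q" using q by (simp add: gpsi_cls)
      show ?thesis
        unfolding G U V
        by (simp add: fa_comm_lin A vscal_uminus vscal_diff algebra_simps)
    qed
    also have "\<dots> \<in> Aplus_ideal"
      unfolding I_def'
      by (rule ideal_diff[OF Aplus_rels_FA ideal_scal[OF Aplus_rels_FA K[OF q(1), unfolded I_def']]
               ideal_scal[OF Aplus_rels_FA K[OF p(1), unfolded I_def']]])
    finally show ?thesis .
  qed
next
  case (add p q)
  have "p \<in> FA gcar" "q \<in> FA gcar" using add.hyps U_rels_FA by (auto intro: fa_ideal_FA)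
  then show ?case using add.IH by (simp add: vadd_eq subst_add FA_fsupp ideal_add I_def')
next
  case (lmult a p)
  have "p \<in> FA gcar" using lmult.hyps U_rels_FA by (auto intro: fa_ideal_FA)
  then show ?case using lmult gpsi_FA psi_FA by (simp add: subst_mult ideal_lmult I_def')
next
  case (rmult a p)
  have "p \<in> FA gcar" using rmult.hyps U_rels_FA by (auto intro: fa_ideal_FA)
  then show ?case using rmult gpsi_FA psi_FA by (simp add: subst_mult ideal_rmult I_def')
qed



lemma prodw_cong: "(\<forall>x\<in>set w. f x = g x) \<Longrightarrow> prodw f w = prodw g w"
  by (induction w) auto

lemma prodw_sg: "prodw (\<lambda>x. sg [x]) w = sg w"
  by (induction w) (simp_all add: fa_mult_sg)

lemma subst_prodw:
  assumes "\<forall>x\<in>set w. f x \<in> FA S'" "\<forall>y\<in>S'. g y \<in> FA S''"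
  shows "subst g (prodw f w) = prodw (\<lambda>x. subst g (f x)) w"
  using assms(1)
proof (induction w)
  case Nil then show ?case by (simp add: subst_sg)
next
  case (Cons x w)
  have "f x \<in> FA S'" "prodw f w \<in> FA S'" using Cons.prems by (auto intro: prodw_FA)
  then show ?case using Cons subst_mult[of "f x" S' "prodw f w" g S''] assms(2) by simp
qed

lemma psi_fphi: "x \<in> SA \<Longrightarrow> PSI (fphi x) = sg [x]"
proof -
  assume x: "x \<in> SA"
  have "PSI (fphi x) = gpsi (letter x)" using letter_gcar[OF x] by (simp add: fphi_def psi_gen)
  also have "\<dots> = sg [x]"
  proof (cases "x = 0")
    case True then show ?thesis by (simp add: letter_def g_delta_cls gpsi_cls)
  next
    case False
    then have "x \<in> S3" using x by (auto simp: S3_def)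
    then show ?thesis using False by (simp add: letter_def g_gen_cls gpsi_cls sg_Leaf_FM)
  qed
  finally show ?thesis .
qed

lemma S3: assumes "p \<in> FA SA" shows "PSI (PHI p) = p"
  using FA_fsupp[OF assms] FA_D[OF assms]
proof (induction rule: fsupp_induct[where Q="\<lambda>w. set w \<subseteq> SA"])
  case zero then show ?case by simp
next
  case (step q c t)
  have q: "q \<in> FA SA" using step by (simp add: FA_def)
  have e1: "PHI (q + vscal c (sg t)) = PHI q + vscal c (prodw fphi t)"
    using step by (simp add: subst_add subst_scal subst_sg)
  have pq: "PHI q \<in> FA gcar" using q by (rule phi_FA)
  have pt: "prodw fphi t \<in> FA gcar" using step fphi_FA by (auto intro!: prodw_FA)
  have "PSI (prodw fphi t) = prodw (\<lambda>x. PSI (fphi x)) t"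
    using step fphi_FA gpsi_FA by (intro subst_prodw[where S'=gcar and S''=SA]) auto
  also have "\<dots> = prodw (\<lambda>x. sg [x]) t"
    using step by (intro prodw_cong) (auto simp: psi_fphi)
  also have "\<dots> = sg t" by (rule prodw_sg)
  finally have e2: "PSI (prodw fphi t) = sg t" .
  show ?case unfolding e1 using pq pt step e2
    by (simp add: subst_add subst_scal FA_fsupp)
qed

lemma J_cong_add: "a - a' \<in> U_ideal \<Longrightarrow> b - b' \<in> U_ideal \<Longrightarrow> (a + b) - (a' + b') \<in> U_ideal"
  using ideal_add[of "a - a'" gcar U_rels "b - b'"] by (simp add: J_def' algebra_simps)

lemma J_cong_scal: "a - a' \<in> U_ideal \<Longrightarrow> vscal c a - vscal c a' \<in> U_ideal"
  using ideal_scal[OF U_rels_FA, of "a - a'" c] by (simp add: J_def' vscal_diff)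

lemma J_trans: "a - b \<in> U_ideal \<Longrightarrow> b - c \<in> U_ideal \<Longrightarrow> a - c \<in> U_ideal"
  using ideal_add[of "a - b" gcar U_rels "b - c"] by (simp add: J_def')

lemma J_sym: "a - b \<in> U_ideal \<Longrightarrow> b - a \<in> U_ideal"
  using ideal_neg[OF U_rels_FA, of "a - b"] by (simp add: J_def')

lemma P3:
  assumes "set_mtree t \<subseteq> S3"
  shows "PHI (lam t) - sg [(0, cls3 (sg t))] \<in> U_ideal"
  using assms
proof (induction t)
  case (Leaf k)
  then have k: "k \<in> S3" "k \<noteq> 0" "k \<in> SA" by (auto simp: S3_def)
  have "PHI (lam (Leaf k)) = sg [(0, cls3 (sg (Leaf k)))]"
    using k by (simp add: phi_gen letter_def g_gen_cls)
  then show ?case by (simp add: J_def')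
next
  case (Node a b)
  have sa: "set_mtree a \<subseteq> S3" and sb: "set_mtree b \<subseteq> S3" using Node.prems by auto
  have la: "lam a \<in> FA SA" and lb: "lam b \<in> FA SA" using lam_FA3[OF sa] lam_FA3[OF sb] by simp_all
  have fa: "sg a \<in> FM S3" "sg b \<in> FM S3" using sa sb by (simp_all add: FM_sg)
  have ga: "(0::complex, cls3 (sg a)) \<in> gcar" "(0::complex, cls3 (sg b)) \<in> gcar" using fa by simp_all
  have "PHI (lam (Node a b)) = fa_comm (PHI (lam a)) (PHI (lam b))"
    using subst_comm[OF la lb fphi_FA] by simp
  moreover have "fa_comm (PHI (lam a)) (PHI (lam b)) - fa_comm (sg [(0, cls3 (sg a))]) (sg [(0, cls3 (sg b))]) \<in> U_ideal"
    unfolding J_def'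
    by (rule ideal_comm_cong[OF U_rels_FA phi_FA[OF la] FA_sg phi_FA[OF lb] FA_sg])
       (use ga Node.IH sa sb in \<open>simp_all add: J_def'\<close>)
  moreover have "g_bracket (0, cls3 (sg a)) (0, cls3 (sg b)) = (0, cls3 (sg (Node a b)))"
    using fa by (simp add: g_bracket_cls fm_mult_sg)
  ultimately show ?case
    using J_br[OF ga] J_trans by simp
qed

lemma P2:
  assumes "p \<in> FM S3"
  shows "PHI (lin lam p) - sg [(0, cls3 p)] \<in> U_ideal"
  using FM_fsupp[OF assms] FM_D[OF assms]
proof (induction rule: fsupp_induct[where Q="\<lambda>t. set_mtree t \<subseteq> S3"])
  case zero
  have "sg [g_scal 0 (0, cls3 0)] - vscal 0 (sg [(0, cls3 0)]) \<in> U_ideal"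
    by (rule J_scal) simp
  then have "sg [(0::complex, cls3 0)] \<in> U_ideal" by (simp add: g_scal_cls)
  then show ?case using J_sym[of "sg [(0::complex, cls3 0)]" 0] by simp
next
  case (step q c t)
  have q: "q \<in> FM S3" using step by (simp add: FM_def)
  have st: "sg t \<in> FM S3" using step by (simp add: FM_sg)
  have lq: "lin lam q \<in> FA SA" using q by (rule Lam_FA3)
  have lt: "lam t \<in> FA SA" using lam_FA3 step by blast
  have e1: "PHI (lin lam (q + vscal c (sg t))) = PHI (lin lam q) + vscal c (PHI (lam t))"
    using step lq lt by (simp add: lin_step subst_add subst_scal FA_fsupp)
  have e2: "(0::complex, cls3 (q + vscal c (sg t))) = g_add (0, cls3 q) (g_scal c (0, cls3 (sg t)))"
    using q st by (simp add: g_scal_cls g_add_cls)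
  have gq: "(0::complex, cls3 q) \<in> gcar" "(0::complex, cls3 (sg t)) \<in> gcar" using q st by simp_all
  have "PHI (lin lam q) + vscal c (PHI (lam t)) - (sg [(0, cls3 q)] + vscal c (sg [(0, cls3 (sg t))])) \<in> U_ideal"
    by (rule J_cong_add[OF step.IH J_cong_scal[OF P3]]) (use step in simp)
  moreover have "(sg [(0, cls3 q)] + vscal c (sg [(0, cls3 (sg t))])) - sg [g_add (0, cls3 q) (g_scal c (0, cls3 (sg t)))] \<in> U_ideal"
  proof -
    have "sg [g_add (0, cls3 q) (g_scal c (0, cls3 (sg t)))] - (sg [(0, cls3 q)] + sg [g_scal c (0, cls3 (sg t))]) \<in> U_ideal"
      using gq by (intro J_add g_scal_gcar)
    moreover have "(sg [(0, cls3 q)] + sg [g_scal c (0, cls3 (sg t))]) - (sg [(0, cls3 q)] + vscal c (sg [(0, cls3 (sg t))])) \<in> U_ideal"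
      using J_cong_add[OF _ J_scal[OF gq(2)], of "sg [(0, cls3 q)]" "sg [(0, cls3 q)]" c] by (simp add: J_def')
    ultimately show ?thesis using J_trans J_sym by blast
  qed
  ultimately show ?case unfolding e1 e2[symmetric] using J_trans by blast
qed

lemma P1:
  assumes "u \<in> gcar"
  shows "PHI (gpsi u) - sg [u] \<in> U_ideal"
proof -
  obtain c p where p: "p \<in> FM S3" "u = (c, cls3 p)" using assms by (auto simp: gcar_iff)
  have lp: "lin lam p \<in> FA SA" using Lam_FA3 p by blast
  have g0: "sg [0::nat] \<in> FA SA" by (simp add: FA_sg)
  have e1: "PHI (gpsi u) = vscal c (sg [g_delta]) + PHI (lin lam p)"
    using p lp g0 by (simp add: gpsi_cls subst_add subst_scal FA_fsupp phi_gen letter_def)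
  have e2: "u = g_add (g_scal c g_delta) (0, cls3 p)"
    using p by (simp add: g_delta_cls g_scal_cls g_add_cls)
  have gd: "g_delta \<in> gcar" by (simp add: g_delta_cls)
  have gp: "(0::complex, cls3 p) \<in> gcar" using p by simp
  have "vscal c (sg [g_delta]) + PHI (lin lam p) - (sg [g_scal c g_delta] + sg [(0, cls3 p)]) \<in> U_ideal"
    by (rule J_cong_add[OF J_sym[OF J_scal[OF gd]] P2[OF p(1)]])
  moreover have "(sg [g_scal c g_delta] + sg [(0, cls3 p)]) - sg [u] \<in> U_ideal"
    unfolding e2 by (rule J_sym[OF J_add[OF g_scal_gcar[OF gd] gp]])
  ultimately show ?thesis unfolding e1 using J_trans by blast
qed

lemma P0:
  assumes "set w \<subseteq> gcar"
  shows "prodw (\<lambda>u. PHI (gpsi u)) w - sg w \<in> U_ideal"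
  using assms
proof (induction w)
  case Nil then show ?case by (simp add: J_def')
next
  case (Cons x w)
  have x: "x \<in> gcar" and w: "set w \<subseteq> gcar" using Cons.prems by auto
  have a: "PHI (gpsi x) \<in> FA gcar" using x gpsi_FA phi_FA by blast
  have b: "prodw (\<lambda>u. PHI (gpsi u)) w \<in> FA gcar"
    using w gpsi_FA phi_FA by (intro prodw_FA) blast
  have "fa_mult (PHI (gpsi x)) (prodw (\<lambda>u. PHI (gpsi u)) w) - fa_mult (sg [x]) (sg w) \<in> U_ideal"
    unfolding J_def'
    by (rule ideal_mult_cong[OF U_rels_FA a FA_sg b FA_sg])
       (use x w P1[OF x] Cons.IH[OF w] in \<open>simp_all add: J_def'\<close>)
  then show ?case by (simp add: fa_mult_sg)
qed

lemma S4: assumes "q \<in> FA gcar" shows "PHI (PSI q) - q \<in> U_ideal"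
  using FA_fsupp[OF assms] FA_D[OF assms]
proof (induction rule: fsupp_induct[where Q="\<lambda>w. set w \<subseteq> gcar"])
  case zero then show ?case by (simp add: J_def')
next
  case (step q c t)
  have q: "q \<in> FA gcar" using step by (simp add: FA_def)
  have pq: "PSI q \<in> FA SA" using q by (rule psi_FA)
  have pt: "prodw gpsi t \<in> FA SA" using step gpsi_FA by (auto intro!: prodw_FA)
  have e1: "PHI (PSI (q + vscal c (sg t))) = PHI (PSI q) + vscal c (PHI (prodw gpsi t))"
    using step pq pt by (simp add: subst_add subst_scal subst_sg FA_fsupp)
  have e2: "PHI (prodw gpsi t) = prodw (\<lambda>u. PHI (gpsi u)) t"
    using step fphi_FA gpsi_FA by (intro subst_prodw[where S'=SA and S''=gcar]) auto
  show ?case unfolding e1 e2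
    by (rule J_cong_add[OF step.IH J_cong_scal[OF P0]]) (use step in simp)
qed

theorem mainTheorem9:
  shows "\<exists>\<phi>. quot_alg_iso {0,1,2,3} Aplus_ideal gcar U_ideal \<phi> \<and>
             vdiff (\<phi> (fa_gen 0)) (fa_gen g_delta) \<in> U_ideal \<and>
             (\<forall>k\<in>{1,2,3}. vdiff (\<phi> (fa_gen k)) (fa_gen (g_gen k)) \<in> U_ideal)"
proof (intro exI[of _ "subst fphi"] conjI ballI)
  show "quot_alg_iso {0,1,2,3} Aplus_ideal gcar U_ideal (subst fphi)"
    unfolding quot_alg_iso_def
  proof (intro conjI ballI allI)
    fix p assume "p \<in> FA SA" then show "PHI p \<in> FA gcar" by (rule phi_FA)
  next
    fix p q assume "p \<in> FA SA" "q \<in> FA SA"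
    then show "PHI (vadd p q) = vadd (PHI p) (PHI q)" by (simp add: vadd_eq subst_add FA_fsupp)
  next
    fix c p assume "p \<in> FA SA"
    then show "PHI (vscal c p) = vscal c (PHI p)" by (simp add: subst_scal FA_fsupp)
  next
    fix p q assume "p \<in> FA SA" "q \<in> FA SA"
    then show "PHI (fa_mult p q) = fa_mult (PHI p) (PHI q)" using fphi_FA by (simp add: subst_mult)
  next
    show "PHI fa_one = fa_one" by (simp add: fa_one_sg subst_sg)
  next
    fix p assume p: "p \<in> FA SA"
    show "PHI p \<in> U_ideal \<longleftrightarrow> p \<in> Aplus_ideal"
    proof
      assume "PHI p \<in> U_ideal"
      then have "PSI (PHI p) \<in> Aplus_ideal" by (rule S2)
      then show "p \<in> Aplus_ideal" using S3[OF p] by simp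
    next
      assume "p \<in> Aplus_ideal" then show "PHI p \<in> U_ideal" by (rule S1)
    qed
  next
    fix q assume q: "q \<in> FA gcar"
    show "\<exists>p\<in>FA SA. vdiff q (PHI p) \<in> U_ideal"
    proof (intro bexI)
      show "PSI q \<in> FA SA" using q by (rule psi_FA)
      show "vdiff q (PHI (PSI q)) \<in> U_ideal" using J_sym[OF S4[OF q]] by (simp add: vdiff_eq)
    qed
  qed
next
  show "vdiff (PHI (fa_gen 0)) (fa_gen g_delta) \<in> U_ideal"
    by (simp add: fa_gen_sg vdiff_eq phi_gen letter_def J_def')
next
  fix k :: nat assume "k \<in> {1,2,3}"
  then show "vdiff (PHI (fa_gen k)) (fa_gen (g_gen k)) \<in> U_ideal"
    by (auto simp: fa_gen_sg vdiff_eq phi_gen letter_def J_def')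
qed


end
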